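(* Let $\gamma=(x,y)$ be a curve with $|\gamma'|\equiv1$, let $t_0>0$, $J=(0,t_0)$, and suppose $\gamma(t)=(0,t)$ for $t\in J$ (extended so that $\gamma(t_0)=(0,t_0)$, $\gamma'(t_0)=(0,1)$). Let $u_0\in\{\pm1\}$. Then there is a fixed interval $\tilde J\Subset J$, and for all sufficiently small $\delta>0$ there are curves $\gamma_\delta=(x_\delta,y_\delta)\in W^{2,2}(J;\mathbb{R}^2)$ such that: (1) $y_\delta>0$ and $x_\delta'\ge0$ in $J$; there is $t_\delta\to0$ as $\delta\to0$ with $\tilde J\subset J\setminus(0,t_\delta)$ such that $\gamma_\delta$ is a vertical line segment (i.e. $x_\delta$ is constant) on $J\setminus(0,t_\delta)$, and $|\gamma_\delta'|=1$ on $J\setminus\tilde J$, $|\gamma_\delta'|=1+r_\delta$ on $\tilde J$ with $r_\delta\in C^0_c(\tilde J)\cap W^{1,2}(\tilde J)$ and $r_\delta\to0$ in $W^{1,2}(\tilde J)$ and uniformly as $\delta\to0$; (2) $\gamma_\delta(0)=(0,\delta)$, $\gamma_\delta'(0)=(1,0)$, $\gamma_\delta(t_0)=(x(t_0)+o(1),y(t_0))$ and $\gamma_\delta'(t_0)=\gamma'(t_0)$ as $\delta\to0$; (3) $\gamma_\delta\to\gamma$ in $W^{1,p}(J;\mathbb{R}^2)$ for every $p\in[1,\infty)$; (4) $\mathcal{A}_{\gamma_\delta}(J)=\mathcal{A}_\gamma(J)+o(1)$ as $\delta\to0$; (5) $\sup_\delta\int_{M_{\gamma_\delta}(J)}|B_\delta|^2d\mu_\delta<\infty$;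 (6) $\int_{M_{\gamma_\delta}(J)}k(u_0)(H_\delta-H_s(u_0))^2d\mu_\delta\to\int_{M_\gamma(J)}k(u_0)(H-H_s(u_0))^2d\mu$ as $\delta\to0$.
   Context: For a Lipschitz curve $\gamma=(x,y)$ with $y\ge0$, $M_\gamma$ is the surface obtained by rotating $\gamma$ about the $x$-axis, area measure $d\mu=|\gamma'|\,y\,dt\,d\theta$; $M_\gamma(J)$ is the part generated by $\gamma(J)$, $\mathcal{A}_\gamma(J)=2\pi\int_J|\gamma'|y\,dt$, and for $\theta$-independent $f$, $\int_{M_\gamma(J)}f\,d\mu=2\pi\int_J f|\gamma'|y\,dt$. Where $\gamma$ is twice weakly differentiable, $\gamma'\ne0$, $y>0$: $\kappa_1=(x''y'-y''x')/|\gamma'|^3$, $\kappa_2=x'/(y|\gamma'|)$, $H=\kappa_1+\kappa_2$, $|B|^2=\kappa_1^2+\kappa_2^2$; quantities for $\gamma_\delta$ carry the index $\delta$. $H_s\colon\mathbb{R}\to\mathbb{R}$ and $k\colon\mathbb{R}\to\mathbb{R}$ are bounded continuous functions with $\inf k>0$. *)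

theory Defs
  imports "HOL-Analysis.Analysis"
begin

text \<open>Curves are given componentwise; first and second derivatives are passed
  explicitly (for Sobolev curves these are the weak derivatives).\<close>

definition speed :: "(real \<Rightarrow> real) \<Rightarrow> (real \<Rightarrow> real) \<Rightarrow> real \<Rightarrow> real" where
  "speed x1 y1 t = sqrt ((x1 t)\<^sup>2 + (y1 t)\<^sup>2)"

definition kappa1 :: "(real \<Rightarrow> real) \<Rightarrow> (real \<Rightarrow> real) \<Rightarrow> (real \<Rightarrow> real) \<Rightarrow> (real \<Rightarrow> real) \<Rightarrow> real \<Rightarrow> real" where
  "kappa1 x1 y1 x2 y2 t = (x2 t * y1 t - y2 t * x1 t) / (speed x1 y1 t) ^ 3"

definition kappa2 :: "(real \<Rightarrow> real) \<Rightarrow> (real \<Rightarrow> real) \<Rightarrow> (real \<Rightarrow> real) \<Rightarrow> real \<Rightarrow> real" where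
  "kappa2 y x1 y1 t = x1 t / (y t * speed x1 y1 t)"

definition meanH :: "(real \<Rightarrow> real) \<Rightarrow> (real \<Rightarrow> real) \<Rightarrow> (real \<Rightarrow> real) \<Rightarrow> (real \<Rightarrow> real) \<Rightarrow> (real \<Rightarrow> real) \<Rightarrow> real \<Rightarrow> real" where
  "meanH y x1 y1 x2 y2 t = kappa1 x1 y1 x2 y2 t + kappa2 y x1 y1 t"

definition normB2 :: "(real \<Rightarrow> real) \<Rightarrow> (real \<Rightarrow> real) \<Rightarrow> (real \<Rightarrow> real) \<Rightarrow> (real \<Rightarrow> real) \<Rightarrow> (real \<Rightarrow> real) \<Rightarrow> real \<Rightarrow> real" where
  "normB2 y x1 y1 x2 y2 t = (kappa1 x1 y1 x2 y2 t)\<^sup>2 + (kappa2 y x1 y1 t)\<^sup>2"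

text \<open>Integral over the rotated surface M_gamma(J) of a theta-independent function:
  2 pi times the integral over J of f |gamma'| y.\<close>
definition surf_int :: "(real \<Rightarrow> real) \<Rightarrow> (real \<Rightarrow> real) \<Rightarrow> (real \<Rightarrow> real) \<Rightarrow> real set \<Rightarrow> (real \<Rightarrow> real) \<Rightarrow> real" where
  "surf_int y x1 y1 J f = 2 * pi * (LINT t:J|lborel. f t * speed x1 y1 t * y t)"

definition surf_integrable :: "(real \<Rightarrow> real) \<Rightarrow> (real \<Rightarrow> real) \<Rightarrow> (real \<Rightarrow> real) \<Rightarrow> real set \<Rightarrow> (real \<Rightarrow> real) \<Rightarrow> bool" where
  "surf_integrable y x1 y1 J f = set_integrable lborel J (\<lambda>t. f t * speed x1 y1 t * y t)"

definition area :: "(real \<Rightarrow> real) \<Rightarrow> (real \<Rightarrow> real) \<Rightarrow> (real \<Rightarrow> real) \<Rightarrow> real set \<Rightarrow> real" where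
  "area y x1 y1 J = surf_int y x1 y1 J (\<lambda>_. 1)"

definition L2_on :: "real set \<Rightarrow> (real \<Rightarrow> real) \<Rightarrow> bool" where
  "L2_on S g \<longleftrightarrow> g \<in> borel_measurable (lebesgue_on S) \<and> set_integrable lborel S (\<lambda>t. (g t)\<^sup>2)"

text \<open>W^{1,2}(a,b) in one dimension (continuous representative on [a,b]):
  f is absolutely continuous with (weak) derivative f1 in L^2.\<close>
definition W12_on :: "real \<Rightarrow> real \<Rightarrow> (real \<Rightarrow> real) \<Rightarrow> (real \<Rightarrow> real) \<Rightarrow> bool" where
  "W12_on a b f f1 \<longleftrightarrow> L2_on {a..b} f1 \<and>
     (\<forall>t\<in>{a..b}. f t = f a + (LINT s:{a..t}|lborel. f1 s))"

text \<open>W^{2,2}(a,b) in one dimension (C^1 representative on [a,b]): f has classical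
  derivative f1 on [a,b], and f1 is in W^{1,2}(a,b) with weak derivative f2.\<close>
definition W22_on :: "real \<Rightarrow> real \<Rightarrow> (real \<Rightarrow> real) \<Rightarrow> (real \<Rightarrow> real) \<Rightarrow> (real \<Rightarrow> real) \<Rightarrow> bool" where
  "W22_on a b f f1 f2 \<longleftrightarrow>
     (\<forall>t\<in>{a..b}. (f has_real_derivative f1 t) (at t within {a..b})) \<and> W12_on a b f1 f2"

end

theory Submission
  imports Defs
begin

lemma DERIV_paste:
  fixes f g :: "real \<Rightarrow> real"
  assumes f: "(f has_real_derivative D) (at c)" and g: "(g has_real_derivative D) (at c)"
    and eq: "f c = g c"
  shows "((\<lambda>t. if t \<le> c then f t else g t) has_real_derivative D) (at c)"
proof -
  let ?F = "\<lambda>t. if t \<le> c then f t else g t"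
  have fl: "((\<lambda>h. (f (c + h) - f c) / h) \<longlongrightarrow> D) (at_left 0)"
    using f unfolding DERIV_def filterlim_at_split by auto
  have gr: "((\<lambda>h. (g (c + h) - g c) / h) \<longlongrightarrow> D) (at_right 0)"
    using g unfolding DERIV_def filterlim_at_split by auto
  have "((\<lambda>h. (?F (c + h) - ?F c) / h) \<longlongrightarrow> D) (at_left 0)"
  proof (rule Lim_transform_eventually[OF fl])
    show "\<forall>\<^sub>F h in at_left 0. (f (c + h) - f c) / h = (?F (c + h) - ?F c) / h"
      by (auto simp: eventually_at_left_field intro!: exI[of _ "-1"])
  qed
  moreover have "((\<lambda>h. (?F (c + h) - ?F c) / h) \<longlongrightarrow> D) (at_right 0)"
  proof (rule Lim_transform_eventually[OF gr])
    show "\<forall>\<^sub>F h in at_right 0. (g (c + h) - g c) / h = (?F (c + h) - ?F c) / h"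
      using eq by (auto simp: eventually_at_right_field intro!: exI[of _ "1"])
  qed
  ultimately show ?thesis unfolding DERIV_def filterlim_at_split by auto
qed

lemma DERIV_if_le:
  fixes f g :: "real \<Rightarrow> real"
  assumes f: "t \<le> c \<Longrightarrow> (f has_real_derivative Df) (at t)"
    and g: "c \<le> t \<Longrightarrow> (g has_real_derivative Dg) (at t)"
    and eq: "t = c \<Longrightarrow> f c = g c \<and> Df = Dg"
  shows "((\<lambda>t. if t \<le> c then f t else g t) has_real_derivative (if t \<le> c then Df else Dg)) (at t)"
proof (cases "t < c")
  case True
  have "((\<lambda>t. if t \<le> c then f t else g t) has_real_derivative Df) (at t)"
    by (rule has_field_derivative_transform_within_open[OF f[OF less_imp_le[OF True]], of "{..<c}"])
       (use True in auto)
  then show ?thesis using True by simp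
next
  case False
  show ?thesis
  proof (cases "t = c")
    case True
    then show ?thesis using DERIV_paste[of f Df c g] f g eq by auto
  next
    case False2: False
    then have "c < t" using False by auto
    have "((\<lambda>t. if t \<le> c then f t else g t) has_real_derivative Dg) (at t)"
      by (rule has_field_derivative_transform_within_open[OF g, of "{c<..}"]) (use \<open>c < t\<close> in auto)
    then show ?thesis using \<open>c < t\<close> by simp
  qed
qed

lemma W12_from:
  fixes f f' :: "real \<Rightarrow> real"
  assumes d: "\<And>t. (f has_real_derivative f' t) (at t)" and c: "continuous_on UNIV f'"
  shows "W12_on a b f f'"
  unfolding W12_on_def L2_on_def
proof (intro conjI ballI)
  have cab: "continuous_on {a..b} f'" using c continuous_on_subset by blast
  show "f' \<in> borel_measurable (lebesgue_on {a..b})"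
    by (rule continuous_imp_measurable_on_sets_lebesgue[OF cab]) auto
  show "set_integrable lborel {a..b} (\<lambda>t. (f' t)\<^sup>2)"
    unfolding set_integrable_def
    by (rule borel_integrable_compact) (auto intro!: continuous_intros cab)
  fix t assume t: "t \<in> {a..b}"
  have ct: "continuous_on {a..t} f'" using c continuous_on_subset by blast
  have si: "set_integrable lborel {a..t} f'"
    unfolding set_integrable_def by (rule borel_integrable_compact) (auto intro!: ct)
  have "(f' has_integral (f t - f a)) {a..t}"
    by (rule fundamental_theorem_of_calculus) (use t in \<open>auto intro!: has_field_derivative_imp_has_derivative
        simp: has_real_derivative_iff_has_vector_derivative[symmetric] intro: DERIV_subset[OF d]\<close>)
  then have "integral {a..t} f' = f t - f a" by (rule integral_unique)
  then show "f t = f a + (LINT s:{a..t}|lborel. f' s)"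
    using set_borel_integral_eq_integral(2)[OF si] by simp
qed

lemma W22_from:
  fixes f f1 f2 :: "real \<Rightarrow> real"
  assumes d1: "\<And>t. t \<in> {a..b} \<Longrightarrow> (f has_real_derivative f1 t) (at t within {a..b})"
    and d2: "\<And>t. (f1 has_real_derivative f2 t) (at t)" and c: "continuous_on UNIV f2"
  shows "W22_on a b f f1 f2"
  unfolding W22_on_def using d1 W12_from[OF d2 c] by auto

definition gA :: "real \<Rightarrow> real" where "gA d = arctan (sqrt d)"
definition LA :: "real \<Rightarrow> real" where "LA d = 2 * gA d * (1 + d)"
definition sB :: "real \<Rightarrow> real" where "sB d = sqrt d + LA d"
definition Qf :: "real \<Rightarrow> real \<Rightarrow> real" where
  "Qf d t = pi/2 - gA d + ((t - sqrt d) - (t - sqrt d)^2 / (2 * LA d)) / (1 + d)"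
definition Qd :: "real \<Rightarrow> real \<Rightarrow> real" where
  "Qd d t = (1 - (t - sqrt d) / LA d) / (1 + d)"
definition th :: "real \<Rightarrow> real \<Rightarrow> real" where
  "th d t = (if t \<le> sqrt d then arctan (t/d) else if t \<le> sB d then Qf d t else pi/2)"
definition thd :: "real \<Rightarrow> real \<Rightarrow> real" where
  "thd d t = (if t \<le> sqrt d then d/(d^2+t^2) else if t \<le> sB d then Qd d t else 0)"

lemma gA_pos: "0 < d \<Longrightarrow> 0 < gA d" by (simp add: gA_def)
lemma LA_pos: "0 < d \<Longrightarrow> 0 < LA d" using gA_pos[of d] by (simp add: LA_def)

lemma Qf_deriv: "0 < d \<Longrightarrow> (Qf d has_real_derivative Qd d t) (at t)"
proof -
  assume d: "0 < d"
  have L0: "LA d \<noteq> 0" using LA_pos[OF d] by simp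
  have "((\<lambda>t. pi/2 - gA d + ((t - sqrt d) - (t - sqrt d)^2 / (2 * LA d)) / (1 + d)) has_real_derivative
     (0 + (1 - 2 * (t - sqrt d) * (1 - 0) / (2 * LA d)) / (1 + d))) (at t)"
    apply (auto intro!: derivative_eq_intros)
    using L0 d by (auto simp: field_simps)
  moreover have "(0 + (1 - 2 * (t - sqrt d) * (1 - 0) / (2 * LA d)) / (1 + d)) = Qd d t"
  proof -
    have "2 * (t - sqrt d) * (1 - 0) / (2 * LA d) = (t - sqrt d) / LA d"
      by (simp only: mult_1_right diff_zero mult_divide_mult_cancel_left_if) simp
    then show ?thesis unfolding Qd_def by simp
  qed
  ultimately show ?thesis unfolding Qf_def[abs_def] by simp
qed

lemma inner_deriv:
  assumes "0 < d"
  shows "((\<lambda>t. if t \<le> sB d then Qf d t else pi/2) has_real_derivative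
     (if t \<le> sB d then Qd d t else 0)) (at t)"
proof (rule DERIV_if_le)
  show "(Qf d has_real_derivative Qd d t) (at t)" by (rule Qf_deriv[OF assms])
  show "((\<lambda>_. pi/2) has_real_derivative 0) (at t)" by simp
  assume "t = sB d"
  have L: "sB d - sqrt d = LA d" by (simp add: sB_def)
  have L0: "LA d \<noteq> 0" using LA_pos[OF assms] by simp
  have "LA d - (LA d)^2 / (2 * LA d) = LA d / 2" using L0 by (simp add: power2_eq_square)
  also have "\<dots> = gA d * (1 + d)" by (simp add: LA_def)
  finally have e: "(LA d - (LA d)^2 / (2 * LA d)) / (1 + d) = gA d" using assms by simp
  assume "t = sB d"
  then show "Qf d (sB d) = pi / 2 \<and> Qd d t = 0"
  proof -
    have "Qf d (sB d) = pi/2 - gA d + (LA d - (LA d)^2 / (2 * LA d)) / (1 + d)"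
      unfolding Qf_def L ..
    also have "\<dots> = pi/2" unfolding e by simp
    moreover have "Qd d (sB d) = 0" using L0 unfolding Qd_def L by simp
    ultimately show ?thesis using \<open>t = sB d\<close> by simp
  qed
qed

lemma arctan_s1: "0 < d \<Longrightarrow> arctan (sqrt d / d) = pi/2 - gA d"
proof -
  assume d: "0 < d"
  have "sqrt d / d = 1 / sqrt d" using d
  proof -
    have s: "sqrt d * sqrt d = d" using d by simp
    have "sqrt d > 0" using d by simp
    then show ?thesis by (subst (2) s[symmetric]) (simp add: field_simps)
  qed
  moreover have "arctan (1 / sqrt d) = pi/2 - arctan (sqrt d)"
    using arctan_inverse[of "sqrt d"] d by (simp add: inverse_eq_divide)
  ultimately show ?thesis unfolding gA_def by simp
qed

lemma th_deriv:
  assumes d: "0 < d"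
  shows "(th d has_real_derivative thd d t) (at t)"
proof -
  have le: "sqrt d \<le> sB d" using LA_pos[OF d] by (simp add: sB_def)
  have "((\<lambda>t. if t \<le> sqrt d then arctan (t/d) else (if t \<le> sB d then Qf d t else pi/2))
      has_real_derivative (if t \<le> sqrt d then d/(d^2+t^2) else (if t \<le> sB d then Qd d t else 0))) (at t)"
  proof (rule DERIV_if_le)
    show "((\<lambda>t. arctan (t / d)) has_real_derivative d / (d\<^sup>2 + t\<^sup>2)) (at t)"
    proof -
      have "((\<lambda>t. arctan (t / d)) has_real_derivative inverse (1 + (t/d)^2) * (1/d)) (at t)"
        by (rule DERIV_chain2[OF DERIV_arctan]) (use d in \<open>auto intro!: derivative_eq_intros\<close>)
      moreover have "inverse (1 + (t/d)^2) * (1/d) = d / (d\<^sup>2 + t\<^sup>2)"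
        using d by (simp add: field_simps power2_eq_square)
      ultimately show ?thesis by simp
    qed
    show "((\<lambda>t. if t \<le> sB d then Qf d t else pi / 2) has_real_derivative
        (if t \<le> sB d then Qd d t else 0)) (at t)" by (rule inner_deriv[OF d])
    assume t: "t = sqrt d"
    have e1: "d / (d\<^sup>2 + t\<^sup>2) = 1 / (1 + d)"
    proof -
      have "0 < d + d * d" using d by (simp add: add_pos_pos)
      then show ?thesis using d t by (simp add: field_simps power2_eq_square)
    qed
    have e2: "Qd d t = 1 / (1 + d)" unfolding Qd_def t by simp
    have e3: "Qf d (sqrt d) = pi/2 - gA d" unfolding Qf_def by simp
    show "arctan (sqrt d / d) = (if sqrt d \<le> sB d then Qf d (sqrt d) else pi / 2) \<and>
      d / (d\<^sup>2 + t\<^sup>2) = (if t \<le> sB d then Qd d t else 0)"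
      using le t e1 e2 e3 arctan_s1[OF d] by auto
  qed
  then show ?thesis unfolding th_def[abs_def] thd_def by simp
qed

lemma thd_cont: assumes d: "0 < d" shows "continuous_on UNIV (thd d)"
proof -
  have L0: "LA d \<noteq> 0" using LA_pos[OF d] by simp
  have le: "sqrt d \<le> sB d" using LA_pos[OF d] by (simp add: sB_def)
  have c1: "continuous_on UNIV (\<lambda>t. if t \<le> sB d then Qd d t else 0)"
    by (rule continuous_on_cases_1) (use L0 d in \<open>auto intro!: continuous_intros simp: Qd_def sB_def\<close>)
  have "continuous_on UNIV (\<lambda>t. if t \<le> sqrt d then d/(d^2+t^2) else (if t \<le> sB d then Qd d t else 0))"
  proof (rule continuous_on_cases_1)
    show "continuous_on {t \<in> UNIV. t \<le> sqrt d} (\<lambda>t. d / (d\<^sup>2 + t\<^sup>2))"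
      using d by (intro continuous_intros) (auto simp: add_pos_nonneg)
    show "continuous_on {t \<in> UNIV. sqrt d \<le> t} (\<lambda>t. if t \<le> sB d then Qd d t else 0)"
      using c1 continuous_on_subset by blast
    have "0 < d + d * d" using d by (simp add: add_pos_pos)
    then show "d / (d\<^sup>2 + (sqrt d)\<^sup>2) = (if sqrt d \<le> sB d then Qd d (sqrt d) else 0)"
      using le d by (simp add: Qd_def field_simps power2_eq_square)
  qed
  then show ?thesis unfolding thd_def[abs_def] .
qed

definition bm :: "real \<Rightarrow> real \<Rightarrow> real" where
  "bm T t = (if t \<le> 5*T/16 then 0 else if t \<le> 7*T/16 then ((T/16)^2 - (t - 3*T/8)^2)^2 else 0)"
definition bmd :: "real \<Rightarrow> real \<Rightarrow> real" where
  "bmd T t = (if t \<le> 5*T/16 then 0 else if t \<le> 7*T/16 then -4*(t - 3*T/8)*((T/16)^2 - (t - 3*T/8)^2) else 0)"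
definition bmF :: "real \<Rightarrow> real \<Rightarrow> real" where
  "bmF T t = (if t \<le> 5*T/16 then 0 else if t \<le> 7*T/16 then
     (T/16)^4 * (t - 3*T/8) - 2*(T/16)^2*(t - 3*T/8)^3/3 + (t - 3*T/8)^5/5 + 8*(T/16)^5/15
     else 16*(T/16)^5/15)"

lemma bm_deriv: "(bm T has_real_derivative bmd T t) (at t)"
proof -
  have i: "((\<lambda>t. if t \<le> 7*T/16 then ((T/16)^2 - (t - 3*T/8)^2)^2 else 0) has_real_derivative
     (if t \<le> 7*T/16 then -4*(t - 3*T/8)*((T/16)^2 - (t - 3*T/8)^2) else 0)) (at t)"
  proof (rule DERIV_if_le)
    show "((\<lambda>t. ((T/16)^2 - (t - 3*T/8)^2)^2) has_real_derivative -4*(t - 3*T/8)*((T/16)^2 - (t - 3*T/8)^2)) (at t)"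
      by (auto intro!: derivative_eq_intros simp: field_simps power2_eq_square)
    show "((\<lambda>t. 0) has_real_derivative 0) (at t)" by simp
    have e: "7*T/16 - 3*T/8 = T/16" by simp
    assume t: "t = 7*T/16"
    show "((T/16)^2 - (7*T/16 - 3*T/8)^2)^2 = 0 \<and> -4*(t - 3*T/8)*((T/16)^2 - (t - 3*T/8)^2) = 0"
      unfolding t e by simp
  qed
  have "((\<lambda>t. if t \<le> 5*T/16 then 0 else (if t \<le> 7*T/16 then ((T/16)^2 - (t - 3*T/8)^2)^2 else 0)) has_real_derivative
     (if t \<le> 5*T/16 then 0 else (if t \<le> 7*T/16 then -4*(t - 3*T/8)*((T/16)^2 - (t - 3*T/8)^2) else 0))) (at t)"
  proof (rule DERIV_if_le)
    show "((\<lambda>t. 0) has_real_derivative 0) (at t)" by simp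
    show "((\<lambda>t. if t \<le> 7*T/16 then ((T/16)^2 - (t - 3*T/8)^2)^2 else 0) has_real_derivative
     (if t \<le> 7*T/16 then -4*(t - 3*T/8)*((T/16)^2 - (t - 3*T/8)^2) else 0)) (at t)" by (rule i)
    have e: "5*T/16 - 3*T/8 = -(T/16)" by simp
    assume t: "t = 5*T/16"
    show "0 = (if 5*T/16 \<le> 7*T/16 then ((T/16)^2 - (5*T/16 - 3*T/8)^2)^2 else 0) \<and>
         0 = (if t \<le> 7*T/16 then -4*(t - 3*T/8)*((T/16)^2 - (t - 3*T/8)^2) else 0)"
      unfolding t e by simp
  qed
  then show ?thesis unfolding bm_def[abs_def] bmd_def .
qed

lemma bmd_cont: "continuous_on UNIV (bmd T)"
  unfolding bmd_def[abs_def]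
  by (intro continuous_on_cases_1 continuous_intros) (auto simp: field_simps power2_eq_square)

lemma G_deriv: "((\<lambda>u. h^4*u - 2*h^2*u^3/3 + u^5/5 + e) has_real_derivative (h^2 - u^2)^2) (at u)" for h u e :: real
  apply (auto intro!: derivative_eq_intros)
  by (simp add: power2_eq_square power4_eq_xxxx field_simps)

lemma bmF_deriv: assumes T: "0 \<le> T" shows "(bmF T has_real_derivative bm T t) (at t)"
proof -
  have i: "((\<lambda>t. if t \<le> 7*T/16 then (T/16)^4 * (t - 3*T/8) - 2*(T/16)^2*(t - 3*T/8)^3/3 + (t - 3*T/8)^5/5 + 8*(T/16)^5/15
     else 16*(T/16)^5/15) has_real_derivative
     (if t \<le> 7*T/16 then ((T/16)^2 - (t - 3*T/8)^2)^2 else 0)) (at t)"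
  proof (rule DERIV_if_le)
    show "((\<lambda>t. (T/16)^4 * (t - 3*T/8) - 2*(T/16)^2*(t - 3*T/8)^3/3 + (t - 3*T/8)^5/5 + 8*(T/16)^5/15)
      has_real_derivative ((T/16)^2 - (t - 3*T/8)^2)^2) (at t)"
    proof -
      have g: "((\<lambda>t. t - 3*T/8) has_real_derivative 1) (at t)" by (auto intro!: derivative_eq_intros)
      show ?thesis using DERIV_chain2[OF G_deriv[where h="T/16" and u="t - 3*T/8" and e="8*(T/16)^5/15"] g]
        by simp
    qed
    show "((\<lambda>t. 16*(T/16)^5/15) has_real_derivative 0) (at t)" by simp
    have e: "7*T/16 - 3*T/8 = T/16" by simp
    assume t: "t = 7*T/16"
    show "(T/16)^4 * (7*T/16 - 3*T/8) - 2*(T/16)^2*(7*T/16 - 3*T/8)^3/3 + (7*T/16 - 3*T/8)^5/5 + 8*(T/16)^5/15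
      = 16*(T/16)^5/15 \<and> ((T/16)^2 - (t - 3*T/8)^2)^2 = 0"
      unfolding t e by (simp add: field_simps eval_nat_numeral)
  qed
  have "((\<lambda>t. if t \<le> 5*T/16 then 0 else (if t \<le> 7*T/16 then (T/16)^4 * (t - 3*T/8) - 2*(T/16)^2*(t - 3*T/8)^3/3 + (t - 3*T/8)^5/5 + 8*(T/16)^5/15
     else 16*(T/16)^5/15)) has_real_derivative
     (if t \<le> 5*T/16 then 0 else (if t \<le> 7*T/16 then ((T/16)^2 - (t - 3*T/8)^2)^2 else 0))) (at t)"
  proof (rule DERIV_if_le)
    show "((\<lambda>t. 0) has_real_derivative 0) (at t)" by simp
    show "((\<lambda>t. if t \<le> 7*T/16 then (T/16)^4 * (t - 3*T/8) - 2*(T/16)^2*(t - 3*T/8)^3/3 + (t - 3*T/8)^5/5 + 8*(T/16)^5/15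
     else 16*(T/16)^5/15) has_real_derivative
     (if t \<le> 7*T/16 then ((T/16)^2 - (t - 3*T/8)^2)^2 else 0)) (at t)" by (rule i)
    have e: "5*T/16 - 3*T/8 = -(T/16)" by simp
    assume t: "t = 5*T/16"
    show "0 = (if 5*T/16 \<le> 7*T/16 then (T/16)^4 * (5*T/16 - 3*T/8) - 2*(T/16)^2*(5*T/16 - 3*T/8)^3/3 + (5*T/16 - 3*T/8)^5/5 + 8*(T/16)^5/15
     else 16*(T/16)^5/15) \<and>
         0 = (if t \<le> 7*T/16 then ((T/16)^2 - (t - 3*T/8)^2)^2 else 0)"
      unfolding t e using T by (simp add: field_simps eval_nat_numeral)
  qed
  then show ?thesis unfolding bm_def[abs_def] bmF_def[abs_def] .
qed

lemma bm_cont: "continuous_on UNIV (bm T)"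
  using bm_deriv by (meson DERIV_isCont continuous_at_imp_continuous_on)

lemma bm_integral: assumes "0 < T" shows "integral {0..T} (bm T) = 16*(T/16)^5/15"
proof -
  have "(bm T has_integral (bmF T T - bmF T 0)) {0..T}"
    by (rule fundamental_theorem_of_calculus)
       (use assms in \<open>auto simp: has_real_derivative_iff_has_vector_derivative[symmetric] intro: DERIV_subset[OF bmF_deriv[of T]]\<close>)
  then show ?thesis using assms by (simp add: integral_unique bmF_def)
qed

lemma bm_bounds: assumes "0 < T" shows "0 \<le> bm T t" "bm T t \<le> (T/16)^4" "\<bar>bmd T t\<bar> \<le> 4*(T/16)^3"
proof -
  show "0 \<le> bm T t" by (simp add: bm_def)
  let ?u = "t - 3*T/8" and ?h = "T/16"
  have A: "\<bar>?u\<bar> \<le> ?h \<Longrightarrow> 0 \<le> ?h^2 - ?u^2 \<and> ?h^2 - ?u^2 \<le> ?h^2"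
  proof -
    assume "\<bar>?u\<bar> \<le> ?h"
    then have "?u^2 \<le> ?h^2" by (metis abs_le_square_iff abs_of_pos assms divide_pos_pos zero_less_numeral)
    then show ?thesis by simp
  qed
  have B: "5*T/16 < t \<and> t \<le> 7*T/16 \<Longrightarrow> \<bar>?u\<bar> \<le> ?h" by (auto simp: abs_if field_simps)
  show "bm T t \<le> (T/16)^4"
  proof (cases "5*T/16 < t \<and> t \<le> 7*T/16")
    case True
    then have "0 \<le> ?h^2 - ?u^2 \<and> ?h^2 - ?u^2 \<le> ?h^2" using A B by blast
    then have "(?h^2 - ?u^2)^2 \<le> (?h^2)^2" by (intro power_mono) auto
    then show ?thesis using True by (simp add: bm_def power_mult[symmetric])
  qed (auto simp: bm_def)
  show "\<bar>bmd T t\<bar> \<le> 4*(T/16)^3"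
  proof (cases "5*T/16 < t \<and> t \<le> 7*T/16")
    case True
    then have h: "0 \<le> ?h^2 - ?u^2 \<and> ?h^2 - ?u^2 \<le> ?h^2" "\<bar>?u\<bar> \<le> ?h" using A B by blast+
    have "\<bar>-4 * ?u * (?h^2 - ?u^2)\<bar> = 4 * \<bar>?u\<bar> * (?h^2 - ?u^2)"
      using h by (simp only: abs_mult abs_of_nonneg)
    also have "\<dots> \<le> 4 * ?h * ?h^2" using h assms by (intro mult_mono) auto
    finally show ?thesis using True by (simp add: bmd_def power3_eq_cube power2_eq_square)
  qed (use assms in \<open>auto simp: bmd_def\<close>)
qed

definition beta :: "real \<Rightarrow> real" where "beta T = 16*(T/16)^5/15"
definition cc :: "real \<Rightarrow> real \<Rightarrow> real" where
  "cc T d = (T - d - integral {0..T} (\<lambda>t. sin (th d t))) / beta T"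
definition rho :: "real \<Rightarrow> real \<Rightarrow> real \<Rightarrow> real" where "rho T d t = 1 + cc T d * bm T t"
definition rhod :: "real \<Rightarrow> real \<Rightarrow> real \<Rightarrow> real" where "rhod T d t = cc T d * bmd T t"
definition X1 :: "real \<Rightarrow> real \<Rightarrow> real \<Rightarrow> real" where "X1 T d t = rho T d t * cos (th d t)"
definition Y1 :: "real \<Rightarrow> real \<Rightarrow> real \<Rightarrow> real" where "Y1 T d t = rho T d t * sin (th d t)"
definition X2 :: "real \<Rightarrow> real \<Rightarrow> real \<Rightarrow> real" where
  "X2 T d t = rhod T d t * cos (th d t) - rho T d t * sin (th d t) * thd d t"
definition Y2 :: "real \<Rightarrow> real \<Rightarrow> real \<Rightarrow> real" where
  "Y2 T d t = rhod T d t * sin (th d t) + rho T d t * cos (th d t) * thd d t"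
definition XX :: "real \<Rightarrow> real \<Rightarrow> real \<Rightarrow> real" where "XX T d t = integral {0..t} (X1 T d)"
definition YY :: "real \<Rightarrow> real \<Rightarrow> real \<Rightarrow> real" where "YY T d t = d + integral {0..t} (Y1 T d)"

lemma th_cont: "0 < d \<Longrightarrow> continuous_on UNIV (th d)"
  using th_deriv by (meson DERIV_isCont continuous_at_imp_continuous_on)

lemma rho_deriv: "(rho T d has_real_derivative rhod T d t) (at t)"
  unfolding rho_def[abs_def] rhod_def by (auto intro!: derivative_eq_intros bm_deriv)

lemma X1_deriv: "0 < d \<Longrightarrow> (X1 T d has_real_derivative X2 T d t) (at t)"
  unfolding X1_def[abs_def] X2_def
  by (auto intro!: derivative_eq_intros rho_deriv th_deriv simp: algebra_simps)

lemma Y1_deriv: "0 < d \<Longrightarrow> (Y1 T d has_real_derivative Y2 T d t) (at t)"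
  unfolding Y1_def[abs_def] Y2_def
  by (auto intro!: derivative_eq_intros rho_deriv th_deriv simp: algebra_simps)

lemma rho_cont: "continuous_on UNIV (rho T d)"
  unfolding rho_def[abs_def] by (intro continuous_intros bm_cont)

lemma X2_cont: "0 < d \<Longrightarrow> continuous_on UNIV (X2 T d)"
  unfolding X2_def[abs_def] rhod_def
  by (intro continuous_intros bmd_cont continuous_on_compose2[OF continuous_on_cos th_cont]
        continuous_on_compose2[OF continuous_on_sin th_cont] rho_cont thd_cont) auto

lemma Y2_cont: "0 < d \<Longrightarrow> continuous_on UNIV (Y2 T d)"
  unfolding Y2_def[abs_def] rhod_def
  by (intro continuous_intros bmd_cont continuous_on_compose2[OF continuous_on_cos th_cont]
        continuous_on_compose2[OF continuous_on_sin th_cont] rho_cont thd_cont) auto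

lemma X1_cont: "0 < d \<Longrightarrow> continuous_on S (X1 T d)"
  using X1_deriv by (meson DERIV_isCont continuous_at_imp_continuous_on)
lemma Y1_cont: "0 < d \<Longrightarrow> continuous_on S (Y1 T d)"
  using Y1_deriv by (meson DERIV_isCont continuous_at_imp_continuous_on)

lemma XX_deriv: "0 < d \<Longrightarrow> t \<in> {0..b} \<Longrightarrow> (XX T d has_real_derivative X1 T d t) (at t within {0..b})"
  unfolding XX_def[abs_def] has_real_derivative_iff_has_vector_derivative
  by (rule integral_has_vector_derivative[OF X1_cont])

lemma YY_deriv: "0 < d \<Longrightarrow> t \<in> {0..b} \<Longrightarrow> (YY T d has_real_derivative Y1 T d t) (at t within {0..b})"
proof -
  assume d: "0 < d" and t: "t \<in> {0..b}"
  have "((\<lambda>u. integral {0..u} (Y1 T d)) has_real_derivative Y1 T d t) (at t within {0..b})"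
    unfolding has_real_derivative_iff_has_vector_derivative
    by (rule integral_has_vector_derivative[OF Y1_cont[OF d] t])
  then have "((\<lambda>u. d + integral {0..u} (Y1 T d)) has_real_derivative 0 + Y1 T d t) (at t within {0..b})"
    by (intro derivative_intros)
  then show ?thesis unfolding YY_def[abs_def] by simp
qed

lemma XX_cont: "0 < d \<Longrightarrow> continuous_on {0..b} (XX T d)"
  by (rule DERIV_continuous_on[OF XX_deriv])
lemma YY_cont: "0 < d \<Longrightarrow> continuous_on {0..b} (YY T d)"
  by (rule DERIV_continuous_on[OF YY_deriv])

lemma W22_XX: "0 < d \<Longrightarrow> W22_on 0 T (XX T d) (X1 T d) (X2 T d)"
  by (rule W22_from[OF XX_deriv X1_deriv X2_cont])
lemma W22_YY: "0 < d \<Longrightarrow> W22_on 0 T (YY T d) (Y1 T d) (Y2 T d)"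
  by (rule W22_from[OF YY_deriv Y1_deriv Y2_cont])

lemma gA_le: "0 \<le> d \<Longrightarrow> gA d \<le> sqrt d"
proof -
  assume d: "0 \<le> d"
  have "0 \<le> arctan (sqrt d)" using d by simp
  then have "\<bar>arctan (sqrt d)\<bar> < pi/2" using arctan_ubound[of "sqrt d"] by simp
  then have "\<bar>arctan (sqrt d)\<bar> \<le> \<bar>tan (arctan (sqrt d))\<bar>" by (rule abs_tan_ge)
  then show ?thesis using d by (simp add: gA_def tan_arctan)
qed

lemma gA_lt: "gA d < pi/2" using arctan_ubound by (simp add: gA_def)

lemma Qf_range:
  assumes d: "0 < d" and t: "sqrt d \<le> t" "t \<le> sB d"
  shows "pi/2 - gA d \<le> Qf d t \<and> Qf d t \<le> pi/2"
proof -
  let ?u = "t - sqrt d" and ?L = "LA d"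
  have L: "0 < ?L" using LA_pos[OF d] .
  have u: "0 \<le> ?u" "?u \<le> ?L" using t by (auto simp: sB_def)
  have a: "0 \<le> ?u - ?u^2/(2*?L)"
  proof -
    have "?u^2/(2*?L) \<le> ?u * ?L/(2*?L)" using u L
      by (intro divide_right_mono) (auto simp: power2_eq_square intro: mult_left_mono)
    also have "\<dots> = ?u/2" using L by simp
    finally show ?thesis using u by simp
  qed
  have b: "?u - ?u^2/(2*?L) \<le> ?L/2"
  proof -
    have "0 \<le> (?L - ?u)^2/(2*?L)" using L by simp
    also have "(?L - ?u)^2/(2*?L) = ?L/2 - (?u - ?u^2/(2*?L))" using L
      by (simp add: power2_eq_square field_simps)
    finally show ?thesis by simp
  qed
  have g: "?L/2/(1+d) = gA d" using d by (simp add: LA_def)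
  have "(?u - ?u^2/(2*?L))/(1+d) \<le> ?L/2/(1+d)" using b d by (intro divide_right_mono) auto
  then have A: "(?u - ?u^2/(2*?L))/(1+d) \<le> gA d" using g by simp
  have B: "0 \<le> (?u - ?u^2/(2*?L))/(1+d)" using a d by simp
  show ?thesis unfolding Qf_def using A B by linarith
qed

lemma th_0: "0 < d \<Longrightarrow> th d 0 = 0" by (simp add: th_def)

lemma th_sB: "0 < d \<Longrightarrow> sB d \<le> t \<Longrightarrow> th d t = pi/2"
proof -
  assume d: "0 < d" and t: "sB d \<le> t"
  have le: "sqrt d \<le> sB d" using LA_pos[OF d] by (simp add: sB_def)
  show ?thesis
  proof (cases "t = sB d")
    case True
    have L0: "LA d \<noteq> 0" using LA_pos[OF d] by simp
    have L: "sB d - sqrt d = LA d" by (simp add: sB_def)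
    have "LA d - (LA d)^2 / (2 * LA d) = LA d / 2" using L0 by (simp add: power2_eq_square)
    also have "\<dots> = gA d * (1 + d)" by (simp add: LA_def)
    finally have e: "(LA d - (LA d)^2 / (2 * LA d)) / (1 + d) = gA d" using d by simp
    have "Qf d (sB d) = pi/2" unfolding Qf_def L e by simp
    then show ?thesis using True le LA_pos[OF d] by (auto simp: th_def sB_def)
  next
    case False
    then show ?thesis using t le by (auto simp: th_def)
  qed
qed

lemma th_range: "0 < d \<Longrightarrow> 0 \<le> t \<Longrightarrow> 0 \<le> th d t \<and> th d t \<le> pi/2"
proof -
  assume d: "0 < d" and t: "0 \<le> t"
  show ?thesis
  proof (cases "t \<le> sqrt d")
    case True
    then show ?thesis using d t arctan_ubound[of "t/d"] by (simp add: th_def)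
  next
    case False
    show ?thesis
    proof (cases "t \<le> sB d")
      case True
      then show ?thesis using False Qf_range[OF d, of t] gA_lt[of d] by (simp add: th_def)
    next
      case False2: False
      then show ?thesis using False by (simp add: th_def)
    qed
  qed
qed

lemma th_ge: "0 < d \<Longrightarrow> sqrt d \<le> t \<Longrightarrow> pi/2 - gA d \<le> th d t"
proof -
  assume d: "0 < d" and t: "sqrt d \<le> t"
  show ?thesis
  proof (cases "t = sqrt d")
    case True then show ?thesis using arctan_s1[OF d] by (simp add: th_def)
  next
    case False
    then show ?thesis using t Qf_range[OF d, of t] gA_pos[OF d]
      by (auto simp: th_def)
  qed
qed

lemma thd_range: "0 < d \<Longrightarrow> 0 \<le> thd d t"
proof -
  assume d: "0 < d"
  have L: "0 < LA d" using LA_pos[OF d] .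
  show ?thesis
  proof (cases "t \<le> sqrt d")
    case True then show ?thesis using d by (simp add: thd_def add_pos_nonneg)
  next
    case False
    then show ?thesis using L d by (auto simp: thd_def Qd_def sB_def field_simps)
  qed
qed

lemma thd_le1: "0 < d \<Longrightarrow> sqrt d \<le> t \<Longrightarrow> thd d t \<le> 1"
proof -
  assume d: "0 < d" and t: "sqrt d \<le> t"
  have L: "0 < LA d" using LA_pos[OF d] .
  show ?thesis
  proof (cases "t = sqrt d")
    case True
    have "d \<le> d\<^sup>2 + d" "0 < d\<^sup>2 + d" using d by (auto simp: add_pos_nonneg)
    then have "d / (d\<^sup>2 + d) \<le> 1" by (simp add: pos_divide_le_eq)
    then show ?thesis using True d by (simp add: thd_def)
  next
    case False
    have "(t - sqrt d) / LA d \<ge> 0" using t L by simp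
    then have "1 - (t - sqrt d) / LA d \<le> 1 + d" using d by linarith
    then show ?thesis using False t L d by (auto simp: thd_def Qd_def)
  qed
qed

lemma thd_sB: "0 < d \<Longrightarrow> sB d \<le> t \<Longrightarrow> thd d t = 0"
proof -
  assume d: "0 < d" and t: "sB d \<le> t"
  have le: "sqrt d < sB d" using LA_pos[OF d] by (simp add: sB_def)
  have L0: "LA d \<noteq> 0" using LA_pos[OF d] by simp
  show ?thesis using t le L0 by (auto simp: thd_def Qd_def sB_def)
qed

lemma cos_th_le: "0 < d \<Longrightarrow> sqrt d \<le> t \<Longrightarrow> cos (th d t) \<le> sqrt d"
proof -
  assume d: "0 < d" and t: "sqrt d \<le> t"
  have t0: "0 \<le> t" using t real_sqrt_ge_zero[of d] d by linarith
  have r: "0 \<le> th d t" "th d t \<le> pi/2" using th_range[OF d t0] by auto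
  have "cos (th d t) = sin (pi/2 - th d t)" by (simp add: sin_cos_eq)
  also have "\<dots> \<le> pi/2 - th d t" using r by (intro sin_x_le_x) auto
  also have "\<dots> \<le> gA d" using th_ge[OF d t] by simp
  also have "\<dots> \<le> sqrt d" using gA_le d by simp
  finally show ?thesis .
qed

definition d0 :: "real \<Rightarrow> real" where "d0 T = min 1 ((T/100)^2)"

lemma param:
  assumes T: "0 < T" and d: "0 < d" "d < d0 T"
  shows "sqrt d < T/100" "d \<le> sqrt d" "sB d \<le> 5 * sqrt d" "d + sB d < T/16" "sB d < T/4"
    "sqrt d \<le> sB d" "0 < sB d"
proof -
  have d1: "d < 1" "d < (T/100)^2" using d by (auto simp: d0_def)
  show s: "sqrt d < T/100" using d1 T real_sqrt_less_mono[OF d1(2)] by simp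
  have "d^2 \<le> d" using d d1 by (simp add: power2_eq_square mult_left_le)
  then show dd: "d \<le> sqrt d" by (rule real_le_rsqrt)
  have "sB d = sqrt d + 2 * gA d * (1 + d)" by (simp add: sB_def LA_def)
  also have "\<dots> \<le> sqrt d + 2 * sqrt d * 2"
    using gA_le[of d] gA_pos[OF d(1)] d d1 by (intro add_left_mono mult_mono) auto
  finally show sb: "sB d \<le> 5 * sqrt d" by simp
  show "d + sB d < T/16" using s dd sb real_sqrt_ge_zero[of d] d by linarith
  show "sB d < T/4" using s sb real_sqrt_ge_zero[of d] d by linarith
  show "sqrt d \<le> sB d" using LA_pos[OF d(1)] by (simp add: sB_def)
  then show "0 < sB d" using d by (smt (verit) real_sqrt_gt_0_iff)
qed

lemma int_split:
  fixes f :: "real \<Rightarrow> real"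
  assumes c: "continuous_on {0..t} f" and t: "0 \<le> t" and D: "0 \<le> D"
    and A: "\<And>s. s \<in> {0..t} \<Longrightarrow> s \<le> D \<Longrightarrow> \<bar>f s\<bar> \<le> A"
    and B: "\<And>s. s \<in> {0..t} \<Longrightarrow> D \<le> s \<Longrightarrow> \<bar>f s\<bar> \<le> B"
    and A0: "0 \<le> A" and B0: "0 \<le> B"
  shows "\<bar>integral {0..t} f\<bar> \<le> A * D + B * t"
proof (cases "t \<le> D")
  case True
  have "norm (integral {0..t} f) \<le> A * (t - 0)"
    by (rule integral_bound) (use t c A True in auto)
  moreover have "A * t \<le> A * D" using A0 True by (simp add: mult_left_mono)
  moreover have "0 \<le> B * t" using B0 t by simp
  ultimately show ?thesis by simp
next
  case False
  have i: "f integrable_on {0..t}" by (rule integrable_continuous_interval[OF c])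
  have sp: "integral {0..D} f + integral {D..t} f = integral {0..t} f"
    by (rule Henstock_Kurzweil_Integration.integral_combine[OF D _ i]) (use False in auto)
  have b1: "norm (integral {0..D} f) \<le> A * (D - 0)"
    by (rule integral_bound) (use D False c A in \<open>auto intro: continuous_on_subset\<close>)
  have b2: "norm (integral {D..t} f) \<le> B * (t - D)"
    by (rule integral_bound) (use D False c B in \<open>auto intro: continuous_on_subset\<close>)
  have "B * (t - D) \<le> B * t" using B0 D by (simp add: mult_left_mono)
  then show ?thesis using sp b1 b2 by (smt (verit) real_norm_def)
qed

definition cb :: "real \<Rightarrow> real \<Rightarrow> real" where "cb T d = 15 * (d + sB d) / T"

context
  fixes T d :: real
  assumes T: "0 < T" and d: "0 < d" and dd: "d < d0 T"
begin

lemma sqd_pos: "0 < sqrt d" using d by simp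

lemma sin_th_int: "\<bar>T - integral {0..T} (\<lambda>t. sin (th d t))\<bar> \<le> sB d"
proof -
  have c: "continuous_on {0..T} (\<lambda>t. sin (th d t))"
    by (intro continuous_on_sin continuous_on_subset[OF th_cont[OF d]]) auto
  have "integral {0..T} (\<lambda>t. 1 - sin (th d t)) = integral {0..T} (\<lambda>t. 1) - integral {0..T} (\<lambda>t. sin (th d t))"
    by (rule integral_diff) (use c in \<open>auto intro: integrable_continuous_interval\<close>)
  also have "\<dots> = T - integral {0..T} (\<lambda>t. sin (th d t))" using T by simp
  finally have e: "integral {0..T} (\<lambda>t. 1 - sin (th d t)) = T - integral {0..T} (\<lambda>t. sin (th d t))" .
  have "\<bar>integral {0..T} (\<lambda>t. 1 - sin (th d t))\<bar> \<le> 1 * sB d + 0 * T"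
  proof (rule int_split)
    show "continuous_on {0..T} (\<lambda>t. 1 - sin (th d t))" using c by (intro continuous_on_diff continuous_on_const)
    show "0 \<le> sB d" using param(7)[OF T d dd] by simp
    fix s assume s: "s \<in> {0..T}"
    have r: "0 \<le> th d s" "th d s \<le> pi/2" using th_range[OF d, of s] s by auto
    have "0 \<le> sin (th d s)" using r by (intro sin_ge_zero) auto
    then show "\<bar>1 - sin (th d s)\<bar> \<le> 1" by (simp add: abs_le_iff)
    assume "sB d \<le> s"
    then have e: "th d s = pi/2" by (rule th_sB[OF d])
    show "\<bar>1 - sin (th d s)\<bar> \<le> 0" unfolding e by simp
  qed (use T in auto)
  then show ?thesis using e by simp
qed

lemma beta_pos: "0 < beta T" using T by (simp add: beta_def)

lemma cc_bound: "\<bar>cc T d\<bar> \<le> (d + sB d) / beta T"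
proof -
  have "\<bar>T - d - integral {0..T} (\<lambda>t. sin (th d t))\<bar> \<le> d + sB d"
    using sin_th_int d by linarith
  then show ?thesis unfolding cc_def using beta_pos by (simp add: abs_divide divide_right_mono)
qed

lemma rho_dev: "\<bar>rho T d t - 1\<bar> \<le> cb T d"
proof -
  have "\<bar>rho T d t - 1\<bar> = \<bar>cc T d\<bar> * bm T t" using bm_bounds(1)[OF T] by (simp add: rho_def abs_mult)
  also have "\<dots> \<le> ((d + sB d) / beta T) * (T/16)^4"
    using cc_bound bm_bounds[OF T] by (intro mult_mono) auto
  also have "\<dots> = cb T d" using T by (simp add: beta_def cb_def field_simps eval_nat_numeral)
  finally show ?thesis .
qed

lemma cb_small: "cb T d < 15/16"
  using param(4)[OF T d dd] T by (simp add: cb_def field_simps)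

lemma cb_nonneg: "0 \<le> cb T d"
  using param(7)[OF T d dd] T d by (simp add: cb_def)

lemma rho_pos: "0 < rho T d t" using rho_dev[of t] cb_small by (simp add: abs_le_iff)
lemma rho_le2: "rho T d t \<le> 2" using rho_dev[of t] cb_small by (simp add: abs_le_iff)

lemma rho_1: "t \<le> 5*T/16 \<Longrightarrow> rho T d t = 1" by (simp add: rho_def bm_def)

lemma sB_le: "sB d < 5*T/16" using param(5)[OF T d dd] T by simp

lemma X1_nonneg: "0 \<le> t \<Longrightarrow> 0 \<le> X1 T d t"
proof -
  assume t: "0 \<le> t"
  have "0 \<le> cos (th d t)" using th_range[OF d t] by (intro cos_ge_zero) auto
  then show ?thesis using rho_pos[of t] by (simp add: X1_def)
qed
lemma Y1_nonneg: "0 \<le> t \<Longrightarrow> 0 \<le> Y1 T d t"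
proof -
  assume t: "0 \<le> t"
  have "0 \<le> sin (th d t)" using th_range[OF d t] by (intro sin_ge_zero) auto
  then show ?thesis using rho_pos[of t] by (simp add: Y1_def)
qed

lemma after_sB: "sB d \<le> t \<Longrightarrow> X1 T d t = 0 \<and> Y1 T d t = rho T d t"
proof -
  assume "sB d \<le> t"
  then have e: "th d t = pi/2" by (rule th_sB[OF d])
  show ?thesis unfolding X1_def Y1_def e by simp
qed

lemma before_sB: "0 \<le> t \<Longrightarrow> t \<le> sB d \<Longrightarrow>
   X1 T d t = cos (th d t) \<and> Y1 T d t = sin (th d t) \<and> 0 \<le> cos (th d t) \<and> cos (th d t) \<le> 1
   \<and> 0 \<le> sin (th d t) \<and> sin (th d t) \<le> 1 \<and> rho T d t = 1"
  using th_range[OF d, of t] rho_1[of t] sB_le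
  by (auto simp: X1_def Y1_def intro!: cos_ge_zero sin_ge_zero)

lemma YY_ge: "0 \<le> t \<Longrightarrow> d \<le> YY T d t"
proof -
  have "0 \<le> integral {0..t} (Y1 T d)"
    by (rule integral_nonneg[OF integrable_continuous_interval[OF Y1_cont[OF d]]]) (use Y1_nonneg in auto)
  then show ?thesis by (simp add: YY_def)
qed

lemma YY_pos: "0 \<le> t \<Longrightarrow> 0 < YY T d t" using YY_ge[of t] d by linarith

lemma YY_mono: "0 \<le> s \<Longrightarrow> s \<le> t \<Longrightarrow> YY T d s \<le> YY T d t"
proof -
  assume s: "0 \<le> s" "s \<le> t"
  have i: "Y1 T d integrable_on {0..t}" by (intro integrable_continuous_interval Y1_cont[OF d])
  have "integral {0..s} (Y1 T d) + integral {s..t} (Y1 T d) = integral {0..t} (Y1 T d)"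
    by (rule Henstock_Kurzweil_Integration.integral_combine[OF s i])
  moreover have "0 \<le> integral {s..t} (Y1 T d)"
    by (rule integral_nonneg[OF integrable_continuous_interval[OF Y1_cont[OF d]]]) (use s Y1_nonneg in auto)
  ultimately show ?thesis by (simp add: YY_def)
qed

lemma YY_upper: "0 \<le> t \<Longrightarrow> t \<le> sB d \<Longrightarrow> YY T d t \<le> d + t"
proof -
  assume t: "0 \<le> t" "t \<le> sB d"
  have "norm (integral {0..t} (Y1 T d)) \<le> 1 * (t - 0)"
  proof (rule integral_bound)
    fix s assume s: "s \<in> {0..t}"
    then show "norm (Y1 T d s) \<le> 1" using before_sB[of s] t by auto
  qed (use t Y1_cont[OF d] in auto)
  then show ?thesis by (simp add: YY_def)
qed

lemma YY_cat: "0 \<le> t \<Longrightarrow> t \<le> sqrt d \<Longrightarrow> YY T d t = sqrt (d^2 + t^2)"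
proof -
  assume t: "0 \<le> t" "t \<le> sqrt d"
  have "(Y1 T d has_integral (sqrt (d^2 + t^2) - sqrt (d^2 + 0^2))) {0..t}"
  proof (rule fundamental_theorem_of_calculus)
    show "0 \<le> t" by fact
    fix s assume s: "s \<in> {0..t}"
    have sb: "s \<le> sB d" using s t param(6)[OF T d dd] by auto
    have pos: "0 < d^2 + s^2" using d by (simp add: add_pos_nonneg)
    have "Y1 T d s = sin (arctan (s/d))" using before_sB[of s] s sb t by (auto simp: th_def)
    also have "\<dots> = s / sqrt (d^2 + s^2)"
    proof -
      have "sqrt (1 + (s/d)^2) = sqrt (d^2 + s^2) / d"
      proof -
        have "1 + (s/d)^2 = (d^2 + s^2) / d^2" using d by (simp add: field_simps)
        then show ?thesis using d by (simp add: real_sqrt_divide)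
      qed
      then show ?thesis using d pos by (simp add: sin_arctan)
    qed
    finally have e: "Y1 T d s = s / sqrt (d^2 + s^2)" .
    have dq: "((\<lambda>s. d^2 + s^2) has_real_derivative (2 * s)) (at s)" by (auto intro!: derivative_eq_intros)
    have "((\<lambda>s. sqrt (d^2 + s^2)) has_real_derivative (inverse (sqrt (d^2 + s^2)) / 2) * (2 * s)) (at s)"
      using DERIV_chain2[OF DERIV_real_sqrt[OF pos] dq] by simp
    then have "((\<lambda>s. sqrt (d^2 + s^2)) has_real_derivative Y1 T d s) (at s within {0..t})"
      unfolding e by (auto intro: DERIV_subset simp: field_simps)
    then show "((\<lambda>s. sqrt (d^2 + s^2)) has_vector_derivative Y1 T d s) (at s within {0..t})"
      by (simp add: has_real_derivative_iff_has_vector_derivative)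
  qed
  then have "integral {0..t} (Y1 T d) = sqrt (d^2 + t^2) - d" using d by (simp add: integral_unique)
  then show ?thesis by (simp add: YY_def)
qed

end

context
  fixes T d :: real
  assumes T: "0 < T" and d: "0 < d" and dd: "d < d0 T"
begin

lemma Y1_alt: "Y1 T d t = sin (th d t) + cc T d * bm T t"
proof (cases "sB d \<le> t")
  case True
  then have e: "th d t = pi/2" by (rule th_sB[OF d])
  show ?thesis unfolding Y1_def rho_def e by simp
next
  case False
  then have "bm T t = 0" using sB_le[OF T d dd] by (simp add: bm_def)
  then show ?thesis by (simp add: Y1_def rho_def)
qed

lemma YY_T: "YY T d T = T"
proof -
  have cs: "continuous_on {0..T} (\<lambda>t. sin (th d t))"
    by (intro continuous_on_sin continuous_on_subset[OF th_cont[OF d]]) auto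
  have cb': "continuous_on {0..T} (\<lambda>t. cc T d * bm T t)"
    by (intro continuous_intros continuous_on_subset[OF bm_cont]) auto
  have "Y1 T d = (\<lambda>t. sin (th d t) + cc T d * bm T t)" by (rule ext) (rule Y1_alt)
  then have "integral {0..T} (Y1 T d) = integral {0..T} (\<lambda>t. sin (th d t) + cc T d * bm T t)"
    by simp
  also have "\<dots> = integral {0..T} (\<lambda>t. sin (th d t)) + integral {0..T} (\<lambda>t. cc T d * bm T t)"
    by (rule integral_add) (use cs cb' in \<open>auto intro: integrable_continuous_interval\<close>)
  also have "integral {0..T} (\<lambda>t. cc T d * bm T t) = cc T d * beta T"
    using bm_integral[OF T] by (simp add: beta_def)
  also have "cc T d * beta T = T - d - integral {0..T} (\<lambda>t. sin (th d t))"
    using beta_pos[OF T d dd] by (simp add: cc_def)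
  finally show ?thesis by (simp add: YY_def)
qed

lemma YY_dev: "t \<in> {0..T} \<Longrightarrow> \<bar>YY T d t - t\<bar> \<le> d + sB d + cb T d * T"
proof -
  assume t: "t \<in> {0..T}"
  have c: "continuous_on {0..t} (\<lambda>s. Y1 T d s - 1)" by (intro continuous_intros Y1_cont[OF d])
  have "integral {0..t} (\<lambda>s. Y1 T d s - 1) = integral {0..t} (Y1 T d) - integral {0..t} (\<lambda>s. 1)"
    by (rule integral_diff) (use Y1_cont[OF d] in \<open>auto intro: integrable_continuous_interval\<close>)
  then have e: "YY T d t - t = d + integral {0..t} (\<lambda>s. Y1 T d s - 1)" using t by (simp add: YY_def)
  have "\<bar>integral {0..t} (\<lambda>s. Y1 T d s - 1)\<bar> \<le> 1 * sB d + cb T d * t"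
  proof (rule int_split[OF c])
    show "0 \<le> sB d" using param(7)[OF T d dd] by simp
    show "0 \<le> cb T d" by (rule cb_nonneg[OF T d dd])
    fix s assume s: "s \<in> {0..t}"
    { assume "s \<le> sB d"
      then show "\<bar>Y1 T d s - 1\<bar> \<le> 1" using before_sB[OF T d dd, of s] s by auto }
    { assume "sB d \<le> s"
      then show "\<bar>Y1 T d s - 1\<bar> \<le> cb T d" using after_sB[OF T d dd, of s] rho_dev[OF T d dd, of s] by simp }
  qed (use t in auto)
  moreover have "cb T d * t \<le> cb T d * T" using t cb_nonneg[OF T d dd] by (simp add: mult_left_mono)
  ultimately show ?thesis using e d by (simp add: abs_le_iff)
qed

lemma XX_bound: "t \<in> {0..T} \<Longrightarrow> \<bar>XX T d t\<bar> \<le> sB d"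
proof -
  assume t: "t \<in> {0..T}"
  have "\<bar>integral {0..t} (X1 T d)\<bar> \<le> 1 * sB d + 0 * t"
  proof (rule int_split[OF X1_cont[OF d]])
    show "0 \<le> sB d" using param(7)[OF T d dd] by simp
    fix s assume s: "s \<in> {0..t}"
    { assume "s \<le> sB d"
      then show "\<bar>X1 T d s\<bar> \<le> 1" using before_sB[OF T d dd, of s] s by auto }
    { assume "sB d \<le> s"
      then show "\<bar>X1 T d s\<bar> \<le> 0" using after_sB[OF T d dd, of s] by simp }
  qed (use t in auto)
  then show ?thesis by (simp add: XX_def)
qed

lemma XX_const: "sB d \<le> t \<Longrightarrow> XX T d t = XX T d (sB d)"
proof -
  assume t: "sB d \<le> t"
  have s0: "0 \<le> sB d" using param(7)[OF T d dd] by simp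
  have "integral {0..sB d} (X1 T d) + integral {sB d..t} (X1 T d) = integral {0..t} (X1 T d)"
    by (rule Henstock_Kurzweil_Integration.integral_combine[OF s0 t
          integrable_continuous_interval[OF X1_cont[OF d]]])
  moreover have "integral {sB d..t} (X1 T d) = integral {sB d..t} (\<lambda>_. 0::real)"
    by (rule integral_cong) (use after_sB[OF T d dd] in auto)
  ultimately show ?thesis by (simp add: XX_def)
qed

lemma speed_eq: "speed (X1 T d) (Y1 T d) t = rho T d t"
proof -
  have "(X1 T d t)^2 + (Y1 T d t)^2 = (rho T d t)^2"
    by (simp add: X1_def Y1_def power_mult_distrib algebra_simps flip: distrib_left)
  then show ?thesis using rho_pos[OF T d dd, of t] by (simp add: speed_def)
qed

lemma kappa1_eq: "kappa1 (X1 T d) (Y1 T d) (X2 T d) (Y2 T d) t = - thd d t / rho T d t"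
proof -
  have "X2 T d t * Y1 T d t - Y2 T d t * X1 T d t = - (rho T d t * rho T d t) * thd d t * (sin (th d t) * sin (th d t) + cos (th d t) * cos (th d t))"
    unfolding X1_def Y1_def X2_def Y2_def by algebra
  moreover have "sin (th d t) * sin (th d t) + cos (th d t) * cos (th d t) = 1"
    using sin_cos_squared_add[of "th d t"] by (simp add: power2_eq_square)
  ultimately have "X2 T d t * Y1 T d t - Y2 T d t * X1 T d t = - (rho T d t * rho T d t) * thd d t" by simp
  then show ?thesis using rho_pos[OF T d dd, of t]
    by (simp add: kappa1_def speed_eq power2_eq_square power3_eq_cube)
qed

lemma kappa2_eq: "kappa2 (YY T d) (X1 T d) (Y1 T d) t = cos (th d t) / YY T d t"
  using rho_pos[OF T d dd, of t] by (simp add: kappa2_def speed_eq X1_def)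

end

context
  fixes T d :: real
  assumes T: "0 < T" and d: "0 < d" and dd: "d < d0 T"
begin

abbreviation "HH t \<equiv> meanH (YY T d) (X1 T d) (Y1 T d) (X2 T d) (Y2 T d) t"
abbreviation "BB t \<equiv> normB2 (YY T d) (X1 T d) (Y1 T d) (X2 T d) (Y2 T d) t"

lemma HH_eq: "HH t = - thd d t / rho T d t + cos (th d t) / YY T d t"
  by (simp add: meanH_def kappa1_eq[OF T d dd] kappa2_eq[OF T d dd])

lemma BB_eq: "BB t = (thd d t / rho T d t)^2 + (cos (th d t) / YY T d t)^2"
  by (simp add: normB2_def kappa1_eq[OF T d dd] kappa2_eq[OF T d dd])

lemma pw_cat:
  assumes t: "0 \<le> t" "t \<le> sqrt d"
  shows "HH t = 0 \<and> BB t * rho T d t * YY T d t \<le> 2 * d / (d^2 + t^2)"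
proof -
  have sb: "t \<le> sB d" using t param(6)[OF T d dd] by linarith
  have r: "rho T d t = 1" using before_sB[OF T d dd t(1) sb] by simp
  let ?q = "d^2 + t^2"
  have q: "0 < ?q" using d by (simp add: add_pos_nonneg)
  have Y: "YY T d t = sqrt ?q" by (rule YY_cat[OF T d dd t])
  have th: "th d t = arctan (t/d)" using t by (simp add: th_def)
  have thd: "thd d t = d / ?q" using t by (simp add: thd_def)
  have sq: "sqrt (1 + (t/d)^2) = sqrt ?q / d"
  proof -
    have "1 + (t/d)^2 = ?q / d^2" using d by (simp add: field_simps)
    then show ?thesis using d by (simp add: real_sqrt_divide)
  qed
  have S: "sqrt ?q * sqrt ?q = ?q" using q by simp
  have Spos: "0 < sqrt ?q" using q by simp
  have c: "cos (th d t) / YY T d t = d / ?q"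
    unfolding th Y cos_arctan sq using d Spos S by (simp add: field_simps)
  have H0: "HH t = 0" unfolding HH_eq r c thd by simp
  have "BB t * rho T d t * YY T d t = 2 * (d / ?q)^2 * sqrt ?q" unfolding BB_eq r c thd by (simp add: Y)
  also have "\<dots> \<le> 2 * d / ?q"
  proof -
    have dS: "d \<le> sqrt ?q" by (rule real_le_rsqrt) simp
    have "2 * (d / ?q)^2 * sqrt ?q = (2 * d / ?q) * (d * sqrt ?q / ?q)" by (simp add: power2_eq_square field_simps)
    also have "d * sqrt ?q / ?q \<le> 1"
    proof -
      have "d * sqrt ?q \<le> sqrt ?q * sqrt ?q" using dS Spos by (intro mult_right_mono) auto
      then show ?thesis using S q by simp
    qed
    then have "(2 * d / ?q) * (d * sqrt ?q / ?q) \<le> (2 * d / ?q) * 1"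
      using d q by (intro mult_left_mono) auto
    finally show ?thesis by simp
  qed
  finally show ?thesis using H0 by simp
qed

lemma pw_mid:
  assumes t: "sqrt d \<le> t" "t \<le> sB d"
  shows "\<bar>HH t\<bar> \<le> 1 \<and> BB t \<le> 2 \<and> YY T d t \<le> d + sB d \<and> rho T d t = 1"
proof -
  have t0: "0 \<le> t" using t(1) real_sqrt_ge_zero[of d] d by linarith
  have r: "rho T d t = 1" using before_sB[OF T d dd t0 t(2)] by simp
  have c: "0 \<le> cos (th d t)" "cos (th d t) \<le> sqrt d"
    using before_sB[OF T d dd t0 t(2)] cos_th_le[OF d t(1)] by auto
  have "sqrt d \<le> YY T d (sqrt d)"
  proof -
    have "YY T d (sqrt d) = sqrt (d^2 + (sqrt d)^2)" by (rule YY_cat[OF T d dd]) (use d in auto)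
    moreover have "sqrt d \<le> sqrt (d^2 + (sqrt d)^2)" by (rule real_le_rsqrt) (use d in simp)
    ultimately show ?thesis by simp
  qed
  also have "YY T d (sqrt d) \<le> YY T d t" by (rule YY_mono[OF T d dd]) (use t d in auto)
  finally have Y: "sqrt d \<le> YY T d t" .
  have Ypos: "0 < YY T d t" using Y d by (smt (verit) real_sqrt_gt_0_iff)
  have k2: "0 \<le> cos (th d t) / YY T d t" "cos (th d t) / YY T d t \<le> 1"
    using c Y Ypos by (auto simp: divide_le_eq_1)
  have k1: "0 \<le> thd d t" "thd d t \<le> 1" using thd_range[OF d] thd_le1[OF d t(1)] by auto
  have "\<bar>HH t\<bar> \<le> 1" unfolding HH_eq r using k1 k2 by (simp add: abs_le_iff)
  moreover have "BB t \<le> 2"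
  proof -
    have "(thd d t)^2 \<le> 1" using k1 by (simp add: power_le_one)
    moreover have "(cos (th d t) / YY T d t)^2 \<le> 1" using k2 by (simp add: power_le_one)
    ultimately show ?thesis unfolding BB_eq r by simp
  qed
  moreover have "YY T d t \<le> d + sB d" using YY_upper[OF T d dd t0 t(2)] t(2) by simp
  ultimately show ?thesis using r by simp
qed

lemma pw_after:
  assumes t: "sB d \<le> t"
  shows "HH t = 0 \<and> BB t = 0"
proof -
  have e: "th d t = pi/2" by (rule th_sB[OF d t])
  have "thd d t = 0" by (rule thd_sB[OF d t])
  then show ?thesis unfolding HH_eq BB_eq e by simp
qed

lemma pw_all:
  assumes t: "0 \<le> t"
  shows "\<bar>HH t\<bar> \<le> 1 \<and> \<bar>HH t\<bar> * YY T d t \<le> d + sB d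
     \<and> BB t * rho T d t * YY T d t \<le> 2 * d / (d^2 + t^2) + 2 * (d + sB d)"
proof -
  have nn: "0 \<le> 2 * d / (d^2 + t^2)" "0 \<le> d + sB d" using d param(7)[OF T d dd] by auto
  consider "t \<le> sqrt d" | "sqrt d \<le> t" "t \<le> sB d" | "sB d \<le> t" by linarith
  then show ?thesis
  proof cases
    case 1 then show ?thesis using pw_cat[OF t 1] nn by simp
  next
    case 2
    have m: "\<bar>HH t\<bar> \<le> 1" "BB t \<le> 2" "YY T d t \<le> d + sB d" "rho T d t = 1" using pw_mid[OF 2] by auto
    have Yp: "0 \<le> YY T d t" using YY_pos[OF T d dd t] by simp
    have "\<bar>HH t\<bar> * YY T d t \<le> 1 * (d + sB d)" using m Yp by (intro mult_mono) auto
    moreover have "BB t * YY T d t \<le> 2 * (d + sB d)" using m Yp by (intro mult_mono) (auto simp: normB2_def)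
    ultimately show ?thesis using m nn by simp
  next
    case 3 then show ?thesis using pw_after[OF 3] nn by simp
  qed
qed

end

lemma LINT_cont:
  fixes f :: "real \<Rightarrow> real"
  assumes c: "continuous_on {a..b} f"
  shows "set_integrable lborel {a<..<b} f" "(LINT t:{a<..<b}|lborel. f t) = integral {a..b} f"
proof -
  have "set_integrable lborel {a..b} f"
    unfolding set_integrable_def by (rule borel_integrable_compact[OF _ c]) auto
  then show si: "set_integrable lborel {a<..<b} f"
    by (rule set_integrable_subset) auto
  show "(LINT t:{a<..<b}|lborel. f t) = integral {a..b} f"
    using set_borel_integral_eq_integral(2)[OF si] integral_open_interval_real[of a b f] by simp
qed

lemma ev_small: "0 < T \<Longrightarrow> eventually (\<lambda>d. 0 < d \<and> d < d0 T) (at_right 0)"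
  unfolding eventually_at_right_field
  by (rule exI[of _ "d0 T"]) (auto simp: d0_def)

lemma sB_lim: "(sB \<longlongrightarrow> 0) (at_right 0)"
proof -
  have "((\<lambda>d. sqrt d + 2 * arctan (sqrt d) * (1 + d)) \<longlongrightarrow> sqrt 0 + 2 * arctan (sqrt 0) * (1 + 0)) (at_right (0::real))"
    by (intro tendsto_intros)
  then show ?thesis by (simp add: sB_def LA_def gA_def[abs_def] sB_def[abs_def])
qed

lemma E_lim: "((\<lambda>d. d + sB d) \<longlongrightarrow> 0) (at_right 0)"
  using tendsto_add[OF _ sB_lim, of "\<lambda>d. d" 0] by (simp add: tendsto_ident_at)

lemma cb_lim: "((\<lambda>d. cb T d) \<longlongrightarrow> 0) (at_right 0)"
  unfolding cb_def using tendsto_divide[OF tendsto_mult[OF tendsto_const E_lim, of 15], of "\<lambda>_. T" T]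
  by (cases "T = 0") auto

lemma unif_lim:
  fixes f :: "real \<Rightarrow> real \<Rightarrow> real"
  assumes T: "0 \<le> T"
    and ev: "\<forall>\<^sub>F d in at_right 0. continuous_on {0..T} (f d) \<and> (\<forall>t\<in>{0..T}. \<bar>f d t - g t\<bar> \<le> e d)"
    and g: "continuous_on {0..T} g" and e: "(e \<longlongrightarrow> 0) (at_right 0)"
  shows "((\<lambda>d. integral {0..T} (f d)) \<longlongrightarrow> integral {0..T} g) (at_right 0)"
proof (rule LIM_zero_cancel, rule Lim_null_comparison)
  show "((\<lambda>d. e d * T) \<longlongrightarrow> 0) (at_right 0)" using tendsto_mult[OF e tendsto_const, of T] by simp
  show "\<forall>\<^sub>F d in at_right 0. norm (integral {0..T} (f d) - integral {0..T} g) \<le> e d * T"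
    using ev
  proof eventually_elim
    case (elim d)
    then have c: "continuous_on {0..T} (f d)" and b: "\<forall>t\<in>{0..T}. \<bar>f d t - g t\<bar> \<le> e d" by auto
    have "integral {0..T} (f d) - integral {0..T} g = integral {0..T} (\<lambda>t. f d t - g t)"
      by (rule integral_diff[symmetric]) (use c g in \<open>auto intro: integrable_continuous_interval\<close>)
    also have "norm \<dots> \<le> e d * (T - 0)"
      by (rule integral_bound) (use T c g b in \<open>auto intro: continuous_intros\<close>)
    finally show ?case by simp
  qed
qed

lemma split_lim:
  fixes f :: "real \<Rightarrow> real \<Rightarrow> real"
  assumes T: "0 \<le> T" and A: "0 \<le> A"
    and ev: "\<forall>\<^sub>F d in at_right 0. continuous_on {0..T} (f d) \<and> 0 \<le> D d \<and> 0 \<le> B d \<and>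
        (\<forall>t\<in>{0..T}. (t \<le> D d \<longrightarrow> \<bar>f d t\<bar> \<le> A + B d) \<and> (D d \<le> t \<longrightarrow> \<bar>f d t\<bar> \<le> B d))"
    and D: "(D \<longlongrightarrow> 0) (at_right 0)" and B: "(B \<longlongrightarrow> 0) (at_right 0)"
  shows "((\<lambda>d. integral {0..T} (f d)) \<longlongrightarrow> 0) (at_right 0)"
proof (rule Lim_null_comparison)
  show "((\<lambda>d. (A + B d) * D d + B d * T) \<longlongrightarrow> 0) (at_right 0)"
    using tendsto_add[OF tendsto_mult[OF tendsto_add[OF tendsto_const B] D] tendsto_mult[OF B tendsto_const]]
    by simp
  show "\<forall>\<^sub>F d in at_right 0. norm (integral {0..T} (f d)) \<le> (A + B d) * D d + B d * T"
    using ev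
  proof eventually_elim
    case (elim d)
    then show ?case using int_split[of T "f d" "D d" "A + B d" "B d"] T A by auto
  qed
qed

context
  fixes T d :: real
  assumes T: "0 < T" and d: "0 < d" and dd: "d < d0 T"
begin

lemma rho_cont_on: "continuous_on S (rho T d)" using rho_cont continuous_on_subset by blast
lemma thd_cont_on: "continuous_on S (thd d)" using thd_cont[OF d] continuous_on_subset by blast
lemma th_cont_on: "continuous_on S (th d)" using th_cont[OF d] continuous_on_subset by blast

lemma intB_cont: "continuous_on {0..T} (\<lambda>t. BB T d t * speed (X1 T d) (Y1 T d) t * YY T d t)"
proof -
  have e: "(\<lambda>t. BB T d t * speed (X1 T d) (Y1 T d) t * YY T d t) =
    (\<lambda>t. ((thd d t / rho T d t)^2 + (cos (th d t) / YY T d t)^2) * rho T d t * YY T d t)"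
    by (rule ext) (simp add: BB_eq[OF T d dd] speed_eq[OF T d dd])
  show ?thesis unfolding e
    by (intro continuous_intros rho_cont_on thd_cont_on th_cont_on YY_cont[OF d])
       (use rho_pos[OF T d dd] YY_pos[OF T d dd] in \<open>auto simp: less_imp_neq[symmetric]\<close>)
qed

lemma intH_cont: "continuous_on {0..T} (\<lambda>t. (K * (HH T d t - c)^2) * speed (X1 T d) (Y1 T d) t * YY T d t)"
proof -
  have e: "(\<lambda>t. (K * (HH T d t - c)^2) * speed (X1 T d) (Y1 T d) t * YY T d t) =
    (\<lambda>t. (K * (- thd d t / rho T d t + cos (th d t) / YY T d t - c)^2) * rho T d t * YY T d t)"
    by (rule ext) (simp add: HH_eq[OF T d dd] speed_eq[OF T d dd])
  show ?thesis unfolding e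
    by (intro continuous_intros rho_cont_on thd_cont_on th_cont_on YY_cont[OF d])
       (use rho_pos[OF T d dd] YY_pos[OF T d dd] in \<open>auto simp: less_imp_neq[symmetric]\<close>)
qed

lemma area_cont: "continuous_on {0..T} (\<lambda>t. 1 * speed (X1 T d) (Y1 T d) t * YY T d t)"
  unfolding speed_eq[OF T d dd]
  by (intro continuous_intros rho_cont_on YY_cont[OF d])

lemma p_cont: assumes p: "0 < p"
  shows "continuous_on {0..T} (\<lambda>t. \<bar>XX T d t\<bar> powr p + \<bar>YY T d t - t\<bar> powr p
     + \<bar>X1 T d t\<bar> powr p + \<bar>Y1 T d t - 1\<bar> powr p)"
  by (intro continuous_intros continuous_on_powr' XX_cont[OF d] YY_cont[OF d] X1_cont[OF d] Y1_cont[OF d])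
     (use p in auto)

lemma arctan_int: "integral {0..T} (\<lambda>t. 2 * d / (d^2 + t^2)) = 2 * arctan (T / d)"
proof -
  have "((\<lambda>t. 2 * d / (d^2 + t^2)) has_integral (2 * arctan (T/d) - 2 * arctan (0/d))) {0..T}"
  proof (rule fundamental_theorem_of_calculus)
    show "0 \<le> T" using T by simp
    fix t :: real
    have "((\<lambda>t. arctan (t / d)) has_real_derivative inverse (1 + (t/d)^2) * (1/d)) (at t)"
      by (rule DERIV_chain2[OF DERIV_arctan]) (use d in \<open>auto intro!: derivative_eq_intros\<close>)
    then have "((\<lambda>t. 2 * arctan (t / d)) has_real_derivative 2 * (inverse (1 + (t/d)^2) * (1/d))) (at t)"
      by (rule DERIV_cmult)
    moreover have "2 * (inverse (1 + (t/d)^2) * (1/d)) = 2 * d / (d\<^sup>2 + t\<^sup>2)"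
      using d by (simp add: field_simps power2_eq_square)
    ultimately have "((\<lambda>t. 2 * arctan (t / d)) has_real_derivative 2 * d / (d\<^sup>2 + t\<^sup>2)) (at t within {0..T})"
      by (auto intro: DERIV_subset)
    then show "((\<lambda>t. 2 * arctan (t / d)) has_vector_derivative 2 * d / (d\<^sup>2 + t\<^sup>2)) (at t within {0..T})"
      by (simp add: has_real_derivative_iff_has_vector_derivative)
  qed
  then show ?thesis by (simp add: integral_unique)
qed

lemma intB_bound: "integral {0..T} (\<lambda>t. BB T d t * speed (X1 T d) (Y1 T d) t * YY T d t) \<le> pi + T * T"
proof -
  have c2: "continuous_on {0..T} (\<lambda>t. 2 * d / (d^2 + t^2) + 2 * (d + sB d))"
    using d by (intro continuous_intros) (auto simp: add_pos_nonneg less_imp_neq[symmetric])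
  have "integral {0..T} (\<lambda>t. BB T d t * speed (X1 T d) (Y1 T d) t * YY T d t)
     \<le> integral {0..T} (\<lambda>t. 2 * d / (d^2 + t^2) + 2 * (d + sB d))"
  proof (rule integral_le)
    show "(\<lambda>t. BB T d t * speed (X1 T d) (Y1 T d) t * YY T d t) integrable_on {0..T}"
      by (rule integrable_continuous_interval[OF intB_cont])
    show "(\<lambda>t. 2 * d / (d^2 + t^2) + 2 * (d + sB d)) integrable_on {0..T}"
      by (rule integrable_continuous_interval[OF c2])
    fix t assume t: "t \<in> {0..T}"
    then show "BB T d t * speed (X1 T d) (Y1 T d) t * YY T d t \<le> 2 * d / (d^2 + t^2) + 2 * (d + sB d)"
      using pw_all[OF T d dd, of t] by (simp add: speed_eq[OF T d dd])
  qed
  also have "\<dots> = 2 * arctan (T / d) + 2 * (d + sB d) * T"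
  proof -
    have "integral {0..T} (\<lambda>t. 2 * d / (d^2 + t^2) + 2 * (d + sB d))
       = integral {0..T} (\<lambda>t. 2 * d / (d^2 + t^2)) + integral {0..T} (\<lambda>t. 2 * (d + sB d))"
      by (rule integral_add) (use d in \<open>auto intro!: integrable_continuous_interval continuous_intros
          simp: add_pos_nonneg less_imp_neq[symmetric]\<close>)
    then show ?thesis using arctan_int T by simp
  qed
  also have "\<dots> \<le> pi + T * T"
  proof -
    have "2 * arctan (T / d) \<le> pi" using arctan_ubound[of "T/d"] by simp
    moreover have "2 * (d + sB d) * T \<le> T * T"
      using param(4)[OF T d dd] T by (intro mult_right_mono) auto
    ultimately show ?thesis by simp
  qed
  finally show ?thesis .
qed

end

definition eY :: "real \<Rightarrow> real \<Rightarrow> real" where "eY T d = d + sB d + cb T d * T"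
definition eA :: "real \<Rightarrow> real \<Rightarrow> real" where "eA T d = cb T d * (T + eY T d) + eY T d"

context
  fixes T d :: real
  assumes T: "0 < T" and d: "0 < d" and dd: "d < d0 T"
begin

lemma eY_nonneg: "0 \<le> eY T d"
  using param(7)[OF T d dd] cb_nonneg[OF T d dd] d T by (simp add: eY_def)

lemma bound_area: "t \<in> {0..T} \<Longrightarrow> \<bar>rho T d t * YY T d t - t\<bar> \<le> eA T d"
proof -
  assume t: "t \<in> {0..T}"
  have dev: "\<bar>YY T d t - t\<bar> \<le> eY T d" using YY_dev[OF T d dd t] by (simp add: eY_def)
  have Y0: "0 \<le> YY T d t" using YY_pos[OF T d dd, of t] t by simp
  have Yu: "YY T d t \<le> T + eY T d" using dev t by (simp add: abs_le_iff)
  have "rho T d t * YY T d t - t = (rho T d t - 1) * YY T d t + (YY T d t - t)" by (simp add: algebra_simps)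
  then have "\<bar>rho T d t * YY T d t - t\<bar> \<le> \<bar>rho T d t - 1\<bar> * YY T d t + \<bar>YY T d t - t\<bar>"
  proof -
    have "\<bar>(rho T d t - 1) * YY T d t + (YY T d t - t)\<bar> \<le> \<bar>(rho T d t - 1) * YY T d t\<bar> + \<bar>YY T d t - t\<bar>"
      by (rule abs_triangle_ineq)
    also have "\<bar>(rho T d t - 1) * YY T d t\<bar> = \<bar>rho T d t - 1\<bar> * YY T d t" using Y0 by (simp add: abs_mult)
    finally show ?thesis using \<open>rho T d t * YY T d t - t = _\<close> by simp
  qed
  also have "\<dots> \<le> cb T d * (T + eY T d) + eY T d"
    using rho_dev[OF T d dd, of t] Y0 Yu dev cb_nonneg[OF T d dd] by (intro add_mono mult_mono) auto
  finally show ?thesis by (simp add: eA_def)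
qed

lemma bound_H: "t \<in> {0..T} \<Longrightarrow>
   \<bar>(K * (HH T d t - c)^2) * rho T d t * YY T d t - K * (0 - c)^2 * t\<bar>
     \<le> \<bar>K\<bar> * (2 * (d + sB d) * (1 + 2 * \<bar>c\<bar>) + c^2 * eA T d)"
proof -
  assume t: "t \<in> {0..T}"
  let ?H = "HH T d t" and ?r = "rho T d t" and ?Y = "YY T d t"
  have pw: "\<bar>?H\<bar> \<le> 1" "\<bar>?H\<bar> * ?Y \<le> d + sB d" using pw_all[OF T d dd, of t] t by auto
  have Y0: "0 \<le> ?Y" using YY_pos[OF T d dd, of t] t by simp
  have r: "0 < ?r" "?r \<le> 2" using rho_pos[OF T d dd] rho_le2[OF T d dd] by auto
  have HrY: "\<bar>?H * ?r * ?Y\<bar> \<le> 2 * (d + sB d)"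
  proof -
    have "\<bar>?H * ?r * ?Y\<bar> = ?r * (\<bar>?H\<bar> * ?Y)" using r Y0 by (simp add: abs_mult)
    also have "\<dots> \<le> 2 * (d + sB d)" using r pw(2) Y0 by (intro mult_mono) auto
    finally show ?thesis .
  qed
  have e: "(?H - c)^2 * ?r * ?Y - (0 - c)^2 * t = ?H * (?H * ?r * ?Y) - 2 * c * (?H * ?r * ?Y) + c^2 * (?r * ?Y - t)"
    by (simp add: power2_eq_square algebra_simps)
  have b1: "\<bar>?H * (?H * ?r * ?Y)\<bar> \<le> 1 * (2 * (d + sB d))"
  proof -
    have "\<bar>?H\<bar> * \<bar>?H * ?r * ?Y\<bar> \<le> 1 * (2 * (d + sB d))" using pw(1) HrY by (intro mult_mono) auto
    then show ?thesis by (simp add: abs_mult)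
  qed
  have b2: "\<bar>2 * c * (?H * ?r * ?Y)\<bar> \<le> 2 * \<bar>c\<bar> * (2 * (d + sB d))"
  proof -
    have "2 * \<bar>c\<bar> * \<bar>?H * ?r * ?Y\<bar> \<le> 2 * \<bar>c\<bar> * (2 * (d + sB d))" using HrY by (intro mult_left_mono) auto
    then show ?thesis by (simp add: abs_mult)
  qed
  have b3: "\<bar>c^2 * (?r * ?Y - t)\<bar> \<le> c^2 * eA T d"
  proof -
    have "c^2 * \<bar>?r * ?Y - t\<bar> \<le> c^2 * eA T d" using bound_area[OF t] by (intro mult_left_mono) auto
    then show ?thesis by (simp add: abs_mult)
  qed
  have "\<bar>(?H - c)^2 * ?r * ?Y - (0 - c)^2 * t\<bar> \<le> 2 * (d + sB d) * (1 + 2 * \<bar>c\<bar>) + c^2 * eA T d"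
  proof -
    have "\<bar>?H * (?H * ?r * ?Y) - 2 * c * (?H * ?r * ?Y) + c^2 * (?r * ?Y - t)\<bar>
       \<le> \<bar>?H * (?H * ?r * ?Y)\<bar> + \<bar>2 * c * (?H * ?r * ?Y)\<bar> + \<bar>c^2 * (?r * ?Y - t)\<bar>" by arith
    moreover have "1 * (2 * (d + sB d)) + 2 * \<bar>c\<bar> * (2 * (d + sB d)) + c^2 * eA T d
       = 2 * (d + sB d) * (1 + 2 * \<bar>c\<bar>) + c^2 * eA T d" by (simp add: algebra_simps)
    ultimately show ?thesis unfolding e using b1 b2 b3 by linarith
  qed
  moreover have "(K * (?H - c)^2) * ?r * ?Y - K * (0 - c)^2 * t = K * ((?H - c)^2 * ?r * ?Y - (0 - c)^2 * t)"
    by (simp add: algebra_simps)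
  ultimately show ?thesis by (simp add: abs_mult mult_left_mono del: power2_abs)
qed

lemma bound_p:
  assumes p: "1 \<le> p" and t: "t \<in> {0..T}"
  shows "(t \<le> sB d \<longrightarrow> \<bar>\<bar>XX T d t\<bar> powr p + \<bar>YY T d t - t\<bar> powr p + \<bar>X1 T d t\<bar> powr p + \<bar>Y1 T d t - 1\<bar> powr p\<bar>
            \<le> 2 + (sB d powr p + eY T d powr p + cb T d powr p))
       \<and> (sB d \<le> t \<longrightarrow> \<bar>\<bar>XX T d t\<bar> powr p + \<bar>YY T d t - t\<bar> powr p + \<bar>X1 T d t\<bar> powr p + \<bar>Y1 T d t - 1\<bar> powr p\<bar>
            \<le> sB d powr p + eY T d powr p + cb T d powr p)"
proof -
  have p0: "0 \<le> p" using p by simp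
  have a1: "\<bar>XX T d t\<bar> powr p \<le> sB d powr p" by (rule powr_mono2[OF p0]) (use XX_bound[OF T d dd t] in auto)
  have a2: "\<bar>YY T d t - t\<bar> powr p \<le> eY T d powr p"
    by (rule powr_mono2[OF p0]) (use YY_dev[OF T d dd t] in \<open>auto simp: eY_def\<close>)
  have t0: "0 \<le> t" using t by simp
  have nn: "0 \<le> \<bar>XX T d t\<bar> powr p + \<bar>YY T d t - t\<bar> powr p + \<bar>X1 T d t\<bar> powr p + \<bar>Y1 T d t - 1\<bar> powr p"
    by simp
  have c1: "t \<le> sB d \<Longrightarrow> \<bar>X1 T d t\<bar> powr p \<le> 1 \<and> \<bar>Y1 T d t - 1\<bar> powr p \<le> 1"
  proof -
    assume ts: "t \<le> sB d"
    have b: "\<bar>X1 T d t\<bar> \<le> 1" "\<bar>Y1 T d t - 1\<bar> \<le> 1" using before_sB[OF T d dd t0 ts] by auto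
    have "\<bar>X1 T d t\<bar> powr p \<le> 1 powr p" by (rule powr_mono2[OF p0]) (use b in auto)
    moreover have "\<bar>Y1 T d t - 1\<bar> powr p \<le> 1 powr p" by (rule powr_mono2[OF p0]) (use b in auto)
    ultimately show ?thesis by simp
  qed
  have c2: "sB d \<le> t \<Longrightarrow> \<bar>X1 T d t\<bar> powr p = 0 \<and> \<bar>Y1 T d t - 1\<bar> powr p \<le> cb T d powr p"
  proof -
    assume ts: "sB d \<le> t"
    have "X1 T d t = 0" "Y1 T d t = rho T d t" using after_sB[OF T d dd ts] by auto
    moreover have "\<bar>rho T d t - 1\<bar> powr p \<le> cb T d powr p"
      by (rule powr_mono2[OF p0]) (use rho_dev[OF T d dd] in auto)
    ultimately show ?thesis by simp
  qed
  have cp: "0 \<le> cb T d powr p" by simp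
  show ?thesis
  proof (intro conjI impI)
    assume ts: "t \<le> sB d"
    show "\<bar>\<bar>XX T d t\<bar> powr p + \<bar>YY T d t - t\<bar> powr p + \<bar>X1 T d t\<bar> powr p + \<bar>Y1 T d t - 1\<bar> powr p\<bar>
            \<le> 2 + (sB d powr p + eY T d powr p + cb T d powr p)"
      unfolding abs_of_nonneg[OF nn] using a1 a2 c1[OF ts] cp by linarith
  next
    assume ts: "sB d \<le> t"
    show "\<bar>\<bar>XX T d t\<bar> powr p + \<bar>YY T d t - t\<bar> powr p + \<bar>X1 T d t\<bar> powr p + \<bar>Y1 T d t - 1\<bar> powr p\<bar>
            \<le> sB d powr p + eY T d powr p + cb T d powr p"
      unfolding abs_of_nonneg[OF nn] using a1 a2 c2[OF ts] by linarith
  qed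
qed

end

lemma per_delta:
  assumes T: "0 < T" and dm: "d \<in> {0<..<d0 T}" and yT: "yT = T"
  shows
 "W22_on 0 T (XX T d) (X1 T d) (X2 T d) \<and> W22_on 0 T (YY T d) (Y1 T d) (Y2 T d) \<and>
  (\<forall>t\<in>{0<..<T}. YY T d t > 0 \<and> X1 T d t \<ge> 0) \<and>
  0 < sB d \<and> sB d \<le> T/4 \<and>
  (\<forall>t\<in>{sB d..<T}. XX T d t = XX T d (sB d)) \<and>
  (\<forall>t\<in>{0<..<T} - {T/4<..<T/2}. speed (X1 T d) (Y1 T d) t = 1) \<and>
  (\<forall>t\<in>{T/4<..<T/2}. speed (X1 T d) (Y1 T d) t = 1 + cc T d * bm T t) \<and>
  continuous_on {T/4<..<T/2} (\<lambda>t. cc T d * bm T t) \<and>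
  (\<exists>K. compact K \<and> K \<subseteq> {T/4<..<T/2} \<and> (\<forall>t\<in>{T/4<..<T/2} - K. cc T d * bm T t = 0)) \<and>
  W12_on (T/4) (T/2) (\<lambda>t. cc T d * bm T t) (\<lambda>t. cc T d * bmd T t) \<and>
  XX T d 0 = 0 \<and> YY T d 0 = d \<and> X1 T d 0 = 1 \<and> Y1 T d 0 = 0 \<and>
  YY T d T = yT \<and> X1 T d T = 0 \<and> Y1 T d T = 1 \<and>
  surf_integrable (YY T d) (X1 T d) (Y1 T d) {0<..<T} (normB2 (YY T d) (X1 T d) (Y1 T d) (X2 T d) (Y2 T d))"
proof -
  have d: "0 < d" and dd: "d < d0 T" using dm by auto
  have s1: "\<forall>t\<in>{0<..<T}. YY T d t > 0 \<and> X1 T d t \<ge> 0"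
    using YY_pos[OF T d dd] X1_nonneg[OF T d dd] by (simp add: less_imp_le)
  have s2: "\<forall>t\<in>{sB d..<T}. XX T d t = XX T d (sB d)" 
  proof
    fix t assume "t \<in> {sB d..<T}"
    then show "XX T d t = XX T d (sB d)" by (intro XX_const[OF T d dd]) simp
  qed
  have s3: "\<forall>t\<in>{0<..<T} - {T/4<..<T/2}. speed (X1 T d) (Y1 T d) t = 1"
  proof
    fix t assume t: "t \<in> {0<..<T} - {T/4<..<T/2}"
    then have "t \<le> T/4 \<or> T/2 \<le> t" by auto
    then have "bm T t = 0" using T by (auto simp: bm_def)
    then show "speed (X1 T d) (Y1 T d) t = 1" by (simp add: speed_eq[OF T d dd] rho_def)
  qed
  have s4: "\<forall>t\<in>{T/4<..<T/2}. speed (X1 T d) (Y1 T d) t = 1 + cc T d * bm T t"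
    by (simp add: speed_eq[OF T d dd] rho_def)
  have s5: "continuous_on {T/4<..<T/2} (\<lambda>t. cc T d * bm T t)"
    by (intro continuous_intros continuous_on_subset[OF bm_cont]) auto
  have s6: "\<exists>K. compact K \<and> K \<subseteq> {T/4<..<T/2} \<and> (\<forall>t\<in>{T/4<..<T/2} - K. cc T d * bm T t = 0)"
  proof (intro exI conjI)
    show "compact {5*T/16..7*T/16}" by simp
    show "{5*T/16..7*T/16} \<subseteq> {T/4<..<T/2}" using T by auto
    show "\<forall>t\<in>{T/4<..<T/2} - {5*T/16..7*T/16}. cc T d * bm T t = 0" by (auto simp: bm_def)
  qed
  have s7: "W12_on (T/4) (T/2) (\<lambda>t. cc T d * bm T t) (\<lambda>t. cc T d * bmd T t)"
  proof (rule W12_from)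
    fix t show "((\<lambda>t. cc T d * bm T t) has_real_derivative cc T d * bmd T t) (at t)"
      by (rule DERIV_cmult[OF bm_deriv])
    show "continuous_on UNIV (\<lambda>t. cc T d * bmd T t)" by (intro continuous_intros bmd_cont)
  qed
  have th0: "th d 0 = 0" by (rule th_0[OF d])
  have rho0: "rho T d 0 = 1" using T by (simp add: rho_def bm_def)
  have rhoT: "rho T d T = 1" using T by (simp add: rho_def bm_def)
  have sbT: "sB d \<le> T" using param(5)[OF T d dd] T by simp
  have s8: "XX T d 0 = 0 \<and> YY T d 0 = d \<and> X1 T d 0 = 1 \<and> Y1 T d 0 = 0"
    by (simp add: XX_def YY_def X1_def Y1_def th0 rho0)
  have s9: "YY T d T = yT \<and> X1 T d T = 0 \<and> Y1 T d T = 1"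
    using YY_T[OF T d dd] after_sB[OF T d dd sbT] rhoT yT by simp
  have s10: "surf_integrable (YY T d) (X1 T d) (Y1 T d) {0<..<T} (normB2 (YY T d) (X1 T d) (Y1 T d) (X2 T d) (Y2 T d))"
    unfolding surf_integrable_def by (rule LINT_cont(1)[OF intB_cont[OF T d dd]])
  have "sB d \<le> T/4" "0 < sB d" using param(5,7)[OF T d dd] by auto
  then show ?thesis
    using W22_XX[OF d] W22_YY[OF d] s1 s2 s3 s4 s5 s6 s7 s8 s9 s10 by blast
qed

lemma ev_param: "0 < T \<Longrightarrow> \<forall>\<^sub>F d in at_right 0. 0 < d \<and> d < d0 T" by (rule ev_small)

lemma cc_lim: assumes T: "0 < T" shows "((\<lambda>d. cc T d) \<longlongrightarrow> 0) (at_right 0)"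
proof (rule Lim_null_comparison)
  show "\<forall>\<^sub>F d in at_right 0. norm (cc T d) \<le> (d + sB d) / beta T"
    using ev_small[OF T] by eventually_elim (use cc_bound[OF T] in auto)
  show "((\<lambda>d. (d + sB d) / beta T) \<longlongrightarrow> 0) (at_right 0)"
    using tendsto_divide[OF E_lim tendsto_const, of "beta T"] T by (simp add: beta_def)
qed

lemma lim_r: assumes T: "0 < T"
  shows "((\<lambda>d. LINT t:{T/4<..<T/2}|lborel. (cc T d * bm T t)\<^sup>2 + (cc T d * bmd T t)\<^sup>2) \<longlongrightarrow> 0) (at_right 0)"
proof -
  let ?C = "LINT t:{T/4<..<T/2}|lborel. (bm T t)\<^sup>2 + (bmd T t)\<^sup>2"
  have e: "\<And>d. (LINT t:{T/4<..<T/2}|lborel. (cc T d * bm T t)\<^sup>2 + (cc T d * bmd T t)\<^sup>2) = (cc T d)\<^sup>2 * ?C"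
  proof -
    fix d
    have "(\<lambda>t. (cc T d * bm T t)\<^sup>2 + (cc T d * bmd T t)\<^sup>2) = (\<lambda>t. (cc T d)\<^sup>2 * ((bm T t)\<^sup>2 + (bmd T t)\<^sup>2))"
      by (rule ext) (simp add: power_mult_distrib algebra_simps)
    then show "?thesis d" by simp
  qed
  have "((\<lambda>d. (cc T d)\<^sup>2 * ?C) \<longlongrightarrow> 0\<^sup>2 * ?C) (at_right 0)"
    by (intro tendsto_intros cc_lim[OF T])
  then show ?thesis unfolding e by simp
qed

lemma lim_unif: assumes T: "0 < T"
  shows "\<forall>\<epsilon>>0. eventually (\<lambda>d. \<forall>t\<in>{T/4<..<T/2}. \<bar>cc T d * bm T t\<bar> < \<epsilon>) (at_right 0)"
proof (intro allI impI)
  fix \<epsilon> :: real assume e: "0 < \<epsilon>"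
  have "eventually (\<lambda>d. cb T d < \<epsilon>) (at_right 0)" by (rule order_tendstoD(2)[OF cb_lim e])
  then show "eventually (\<lambda>d. \<forall>t\<in>{T/4<..<T/2}. \<bar>cc T d * bm T t\<bar> < \<epsilon>) (at_right 0)"
    using ev_small[OF T]
  proof eventually_elim
    case (elim d)
    show ?case
    proof
      fix t
      have "\<bar>cc T d * bm T t\<bar> = \<bar>rho T d t - 1\<bar>" by (simp add: rho_def)
      also have "\<dots> \<le> cb T d" using rho_dev[OF T] elim by auto
      finally show "\<bar>cc T d * bm T t\<bar> < \<epsilon>" using elim by simp
    qed
  qed
qed

lemma lim_X: assumes T: "0 < T" and x0: "x0 = 0"
  shows "((\<lambda>d. XX T d T) \<longlongrightarrow> x0) (at_right 0)"
  unfolding x0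
proof (rule Lim_null_comparison[OF _ sB_lim])
  show "\<forall>\<^sub>F d in at_right 0. norm (XX T d T) \<le> sB d"
    using ev_small[OF T] by eventually_elim (use XX_bound[OF T] T in auto)
qed

lemma eY_lim: "((\<lambda>d. eY T d) \<longlongrightarrow> 0) (at_right 0)"
proof -
  have "((\<lambda>d. (d + sB d) + cb T d * T) \<longlongrightarrow> 0 + 0 * T) (at_right 0)"
    by (intro tendsto_intros E_lim cb_lim)
  then show ?thesis by (simp add: eY_def add.assoc)
qed

lemma eA_lim: "((\<lambda>d. eA T d) \<longlongrightarrow> 0) (at_right 0)"
proof -
  have "((\<lambda>d. cb T d * (T + eY T d) + eY T d) \<longlongrightarrow> 0 * (T + 0) + 0) (at_right 0)"
    by (intro tendsto_intros eY_lim cb_lim)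
  then show ?thesis by (simp add: eA_def)
qed

lemma lim_p:
  assumes T: "0 < T"
    and hx: "\<forall>t\<in>{0<..<T}. x t = 0 \<and> y t = t \<and> deriv x t = 0 \<and> deriv y t = 1"
  shows "\<forall>p::real. 1 \<le> p \<longrightarrow>
         ((\<lambda>\<delta>. LINT t:{0<..<T}|lborel.
              \<bar>XX T \<delta> t - x t\<bar> powr p + \<bar>YY T \<delta> t - y t\<bar> powr p
              + \<bar>X1 T \<delta> t - deriv x t\<bar> powr p + \<bar>Y1 T \<delta> t - deriv y t\<bar> powr p) \<longlongrightarrow> 0)
           (at_right 0)"
proof (intro allI impI)
  fix p :: real assume p: "1 \<le> p"
  let ?G = "\<lambda>\<delta> t. \<bar>XX T \<delta> t\<bar> powr p + \<bar>YY T \<delta> t - t\<bar> powr p + \<bar>X1 T \<delta> t\<bar> powr p + \<bar>Y1 T \<delta> t - 1\<bar> powr p"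
  let ?B = "\<lambda>\<delta>. sB \<delta> powr p + eY T \<delta> powr p + cb T \<delta> powr p"
  have lim: "((\<lambda>\<delta>. integral {0..T} (?G \<delta>)) \<longlongrightarrow> 0) (at_right 0)"
  proof (rule split_lim[where D = sB and A = 2 and B = ?B])
    show "0 \<le> T" using T by simp
    show "(sB \<longlongrightarrow> 0) (at_right 0)" by (rule sB_lim)
    have p0: "0 < p" using p by simp
    have sBnn: "\<forall>\<^sub>F d in at_right 0. 0 \<le> sB d"
      using ev_small[OF T] by eventually_elim (use param(7)[OF T] in force)
    have eYnn: "\<forall>\<^sub>F d in at_right 0. 0 \<le> eY T d"
      using ev_small[OF T] by eventually_elim (use eY_nonneg[OF T] in auto)
    have cbnn: "\<forall>\<^sub>F d in at_right 0. 0 \<le> cb T d"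
      using ev_small[OF T] by eventually_elim (use cb_nonneg[OF T] in auto)
    have "((\<lambda>\<delta>. sB \<delta> powr p + eY T \<delta> powr p + cb T \<delta> powr p) \<longlongrightarrow> 0 + 0 + 0) (at_right 0)"
      by (intro tendsto_add tendsto_zero_powrI[OF sB_lim tendsto_const sBnn p0]
          tendsto_zero_powrI[OF eY_lim tendsto_const eYnn p0] tendsto_zero_powrI[OF cb_lim tendsto_const cbnn p0])
    then show "(?B \<longlongrightarrow> 0) (at_right 0)" by simp
    show "\<forall>\<^sub>F d in at_right 0. continuous_on {0..T} (?G d) \<and> 0 \<le> sB d \<and> 0 \<le> ?B d \<and>
        (\<forall>t\<in>{0..T}. (t \<le> sB d \<longrightarrow> \<bar>?G d t\<bar> \<le> 2 + ?B d) \<and> (sB d \<le> t \<longrightarrow> \<bar>?G d t\<bar> \<le> ?B d))"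
      using ev_small[OF T]
    proof eventually_elim
      case (elim d)
      then have d: "0 < d" and dd: "d < d0 T" by auto
      show ?case using p_cont[OF T d dd p0] param(7)[OF T d dd] bound_p[OF T d dd p] by auto
    qed
  qed simp
  show "((\<lambda>\<delta>. LINT t:{0<..<T}|lborel.
              \<bar>XX T \<delta> t - x t\<bar> powr p + \<bar>YY T \<delta> t - y t\<bar> powr p
              + \<bar>X1 T \<delta> t - deriv x t\<bar> powr p + \<bar>Y1 T \<delta> t - deriv y t\<bar> powr p) \<longlongrightarrow> 0) (at_right 0)"
  proof (rule Lim_transform_eventually[OF lim])
    show "\<forall>\<^sub>F \<delta> in at_right 0. integral {0..T} (?G \<delta>) = (LINT t:{0<..<T}|lborel.
              \<bar>XX T \<delta> t - x t\<bar> powr p + \<bar>YY T \<delta> t - y t\<bar> powr p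
              + \<bar>X1 T \<delta> t - deriv x t\<bar> powr p + \<bar>Y1 T \<delta> t - deriv y t\<bar> powr p)"
      using ev_small[OF T]
    proof eventually_elim
      case (elim d)
      then have d: "0 < d" and dd: "d < d0 T" by auto
      have "(LINT t:{0<..<T}|lborel.
              \<bar>XX T d t - x t\<bar> powr p + \<bar>YY T d t - y t\<bar> powr p
              + \<bar>X1 T d t - deriv x t\<bar> powr p + \<bar>Y1 T d t - deriv y t\<bar> powr p)
          = (LINT t:{0<..<T}|lborel. ?G d t)"
        by (rule set_lebesgue_integral_cong) (use hx in auto)
      also have "\<dots> = integral {0..T} (?G d)"
        by (rule LINT_cont(2)[OF p_cont[OF T d dd]]) (use p in simp)
      finally show ?case by simp
    qed
  qed
qed

lemma lim_area:
  assumes T: "0 < T"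
    and hx: "\<forall>t\<in>{0<..<T}. y t = t \<and> speed (deriv x) (deriv y) t = 1"
  shows "((\<lambda>\<delta>. area (YY T \<delta>) (X1 T \<delta>) (Y1 T \<delta>) {0<..<T})
          \<longlongrightarrow> area y (deriv x) (deriv y) {0<..<T}) (at_right 0)"
proof -
  have rhs: "area y (deriv x) (deriv y) {0<..<T} = 2 * pi * integral {0..T} (\<lambda>t. t)"
  proof -
    have "(LINT t:{0<..<T}|lborel. 1 * speed (deriv x) (deriv y) t * y t) = (LINT t:{0<..<T}|lborel. t)"
      by (rule set_lebesgue_integral_cong) (use hx in auto)
    also have "\<dots> = integral {0..T} (\<lambda>t. t)" by (rule LINT_cont(2)) (intro continuous_intros)
    finally show ?thesis by (simp add: area_def surf_int_def)
  qed
  have lim: "((\<lambda>\<delta>. integral {0..T} (\<lambda>t. 1 * speed (X1 T \<delta>) (Y1 T \<delta>) t * YY T \<delta> t)) \<longlongrightarrow> integral {0..T} (\<lambda>t. t)) (at_right 0)"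
  proof (rule unif_lim[where e = "eA T"])
    show "0 \<le> T" using T by simp
    show "continuous_on {0..T} (\<lambda>t. t)" by (intro continuous_intros)
    show "(eA T \<longlongrightarrow> 0) (at_right 0)" by (rule eA_lim)
    show "\<forall>\<^sub>F d in at_right 0. continuous_on {0..T} (\<lambda>t. 1 * speed (X1 T d) (Y1 T d) t * YY T d t) \<and>
        (\<forall>t\<in>{0..T}. \<bar>1 * speed (X1 T d) (Y1 T d) t * YY T d t - t\<bar> \<le> eA T d)"
      using ev_small[OF T]
    proof eventually_elim
      case (elim d)
      then have d: "0 < d" and dd: "d < d0 T" by auto
      show ?case using area_cont[OF T d dd] bound_area[OF T d dd] speed_eq[OF T d dd] by simp
    qed
  qed
  have "((\<lambda>\<delta>. 2 * pi * integral {0..T} (\<lambda>t. 1 * speed (X1 T \<delta>) (Y1 T \<delta>) t * YY T \<delta> t)) \<longlongrightarrow> 2 * pi * integral {0..T} (\<lambda>t. t)) (at_right 0)"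
    by (intro tendsto_mult_left lim)
  then show ?thesis unfolding rhs
  proof (rule Lim_transform_eventually)
    show "\<forall>\<^sub>F \<delta> in at_right 0. 2 * pi * integral {0..T} (\<lambda>t. 1 * speed (X1 T \<delta>) (Y1 T \<delta>) t * YY T \<delta> t) =
      area (YY T \<delta>) (X1 T \<delta>) (Y1 T \<delta>) {0<..<T}"
      using ev_small[OF T]
    proof eventually_elim
      case (elim d)
      then have d: "0 < d" and dd: "d < d0 T" by auto
      show ?case unfolding area_def surf_int_def using LINT_cont(2)[OF area_cont[OF T d dd]] by simp
    qed
  qed
qed

lemma bound_C:
  assumes T: "0 < T"
  shows "\<exists>C. \<forall>\<delta>\<in>{0<..<d0 T}.
         surf_int (YY T \<delta>) (X1 T \<delta>) (Y1 T \<delta>) {0<..<T}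
           (normB2 (YY T \<delta>) (X1 T \<delta>) (Y1 T \<delta>) (X2 T \<delta>) (Y2 T \<delta>)) \<le> C"
proof (intro exI ballI)
  fix d assume "d \<in> {0<..<d0 T}"
  then have d: "0 < d" and dd: "d < d0 T" by auto
  have "surf_int (YY T d) (X1 T d) (Y1 T d) {0<..<T} (normB2 (YY T d) (X1 T d) (Y1 T d) (X2 T d) (Y2 T d))
     = 2 * pi * integral {0..T} (\<lambda>t. BB T d t * speed (X1 T d) (Y1 T d) t * YY T d t)"
    unfolding surf_int_def using LINT_cont(2)[OF intB_cont[OF T d dd]] by simp
  also have "\<dots> \<le> 2 * pi * (pi + T * T)" using intB_bound[OF T d dd] by simp
  finally show "surf_int (YY T d) (X1 T d) (Y1 T d) {0<..<T} (normB2 (YY T d) (X1 T d) (Y1 T d) (X2 T d) (Y2 T d))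
     \<le> 2 * pi * (pi + T * T)" .
qed

lemma lim_H:
  assumes T: "0 < T"
    and hx: "\<forall>t\<in>{0<..<T}. y t = t \<and> speed (deriv x) (deriv y) t = 1 \<and>
        meanH y (deriv x) (deriv y) (deriv (deriv x)) (deriv (deriv y)) t = 0"
  shows "((\<lambda>\<delta>. surf_int (YY T \<delta>) (X1 T \<delta>) (Y1 T \<delta>) {0<..<T}
           (\<lambda>t. K * (meanH (YY T \<delta>) (X1 T \<delta>) (Y1 T \<delta>) (X2 T \<delta>) (Y2 T \<delta>) t - c)\<^sup>2))
        \<longlongrightarrow> surf_int y (deriv x) (deriv y) {0<..<T}
           (\<lambda>t. K * (meanH y (deriv x) (deriv y) (deriv (deriv x)) (deriv (deriv y)) t - c)\<^sup>2))
        (at_right 0)"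
proof -
  let ?g = "\<lambda>t. K * (0 - c)^2 * t"
  have gc: "continuous_on {0..T} ?g" by (intro continuous_intros)
  have rhs: "surf_int y (deriv x) (deriv y) {0<..<T}
           (\<lambda>t. K * (meanH y (deriv x) (deriv y) (deriv (deriv x)) (deriv (deriv y)) t - c)\<^sup>2)
     = 2 * pi * integral {0..T} ?g"
  proof -
    have "(LINT t:{0<..<T}|lborel. K * (meanH y (deriv x) (deriv y) (deriv (deriv x)) (deriv (deriv y)) t - c)\<^sup>2
            * speed (deriv x) (deriv y) t * y t) = (LINT t:{0<..<T}|lborel. ?g t)"
      by (rule set_lebesgue_integral_cong) (use hx in auto)
    also have "\<dots> = integral {0..T} ?g" by (rule LINT_cont(2)[OF gc])
    finally show ?thesis by (simp add: surf_int_def)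
  qed
  let ?E = "\<lambda>d. \<bar>K\<bar> * (2 * (d + sB d) * (1 + 2 * \<bar>c\<bar>) + c^2 * eA T d)"
  have Elim: "(?E \<longlongrightarrow> 0) (at_right 0)"
  proof -
    have "(?E \<longlongrightarrow> \<bar>K\<bar> * (2 * 0 * (1 + 2 * \<bar>c\<bar>) + c^2 * 0)) (at_right 0)"
      by (intro tendsto_intros E_lim eA_lim)
    then show ?thesis by simp
  qed
  have lim: "((\<lambda>\<delta>. integral {0..T} (\<lambda>t. (K * (HH T \<delta> t - c)^2) * speed (X1 T \<delta>) (Y1 T \<delta>) t * YY T \<delta> t))
      \<longlongrightarrow> integral {0..T} ?g) (at_right 0)"
  proof (rule unif_lim[where e = ?E])
    show "0 \<le> T" using T by simp
    show "\<forall>\<^sub>F d in at_right 0. continuous_on {0..T} (\<lambda>t. (K * (HH T d t - c)^2) * speed (X1 T d) (Y1 T d) t * YY T d t) \<and>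
        (\<forall>t\<in>{0..T}. \<bar>(K * (HH T d t - c)^2) * speed (X1 T d) (Y1 T d) t * YY T d t - ?g t\<bar> \<le> ?E d)"
      using ev_small[OF T]
    proof eventually_elim
      case (elim d)
      then have d: "0 < d" and dd: "d < d0 T" by auto
      show ?case using intH_cont[OF T d dd] bound_H[OF T d dd] speed_eq[OF T d dd] by simp
    qed
  qed (use gc Elim in auto)
  have "((\<lambda>\<delta>. 2 * pi * integral {0..T} (\<lambda>t. (K * (HH T \<delta> t - c)^2) * speed (X1 T \<delta>) (Y1 T \<delta>) t * YY T \<delta> t))
      \<longlongrightarrow> 2 * pi * integral {0..T} ?g) (at_right 0)"
    by (intro tendsto_mult_left lim)
  then show ?thesis unfolding rhs
  proof (rule Lim_transform_eventually)
    show "\<forall>\<^sub>F \<delta> in at_right 0. 2 * pi * integral {0..T} (\<lambda>t. (K * (HH T \<delta> t - c)^2) * speed (X1 T \<delta>) (Y1 T \<delta>) t * YY T \<delta> t) =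
      surf_int (YY T \<delta>) (X1 T \<delta>) (Y1 T \<delta>) {0<..<T}
           (\<lambda>t. K * (meanH (YY T \<delta>) (X1 T \<delta>) (Y1 T \<delta>) (X2 T \<delta>) (Y2 T \<delta>) t - c)\<^sup>2)"
      using ev_small[OF T]
    proof eventually_elim
      case (elim d)
      then have d: "0 < d" and dd: "d < d0 T" by auto
      show ?case unfolding surf_int_def using LINT_cont(2)[OF intH_cont[OF T d dd, of K c]] by simp
    qed
  qed
qed

theorem mainTheorem10:
  fixes x y :: "real \<Rightarrow> real" and t0 u0 :: real and k Hs :: "real \<Rightarrow> real"
  assumes t0_pos: "0 < t0"
    and line: "\<forall>t\<in>{0<..<t0}. x t = 0 \<and> y t = t"
    and unit_speed: "\<forall>t\<in>{0<..<t0}. x differentiable at t \<and> y differentiable at t \<and>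
                        speed (deriv x) (deriv y) t = 1"
    and end_pt: "x t0 = 0" "y t0 = t0"
    and end_der: "(x has_real_derivative 0) (at t0 within {..t0})"
                 "(y has_real_derivative 1) (at t0 within {..t0})"
    and u0: "u0 \<in> {-1, 1}"
    and Hs: "continuous_on UNIV Hs" "bounded (range Hs)"
    and k: "continuous_on UNIV k" "bounded (range k)" "0 < Inf (range k)"
  shows "\<exists>a b. 0 < a \<and> a < b \<and> b < t0 \<and>
    (\<exists>\<delta>0>0. \<exists>(X::real\<Rightarrow>real\<Rightarrow>real) (Y::real\<Rightarrow>real\<Rightarrow>real) X1 Y1 X2 Y2
        (td::real\<Rightarrow>real) (r::real\<Rightarrow>real\<Rightarrow>real) (R1::real\<Rightarrow>real\<Rightarrow>real).
      (\<forall>\<delta>\<in>{0<..<\<delta>0}.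
         W22_on 0 t0 (X \<delta>) (X1 \<delta>) (X2 \<delta>) \<and> W22_on 0 t0 (Y \<delta>) (Y1 \<delta>) (Y2 \<delta>) \<and>
         \<comment> \<open>(1)\<close>
         (\<forall>t\<in>{0<..<t0}. Y \<delta> t > 0 \<and> X1 \<delta> t \<ge> 0) \<and>
         0 < td \<delta> \<and> td \<delta> \<le> a \<and>
         (\<forall>t\<in>{td \<delta>..<t0}. X \<delta> t = X \<delta> (td \<delta>)) \<and>
         (\<forall>t\<in>{0<..<t0} - {a<..<b}. speed (X1 \<delta>) (Y1 \<delta>) t = 1) \<and>
         (\<forall>t\<in>{a<..<b}. speed (X1 \<delta>) (Y1 \<delta>) t = 1 + r \<delta> t) \<and>
         continuous_on {a<..<b} (r \<delta>) \<and>
         (\<exists>K. compact K \<and> K \<subseteq> {a<..<b} \<and> (\<forall>t\<in>{a<..<b} - K. r \<delta> t = 0)) \<and>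
         W12_on a b (r \<delta>) (R1 \<delta>) \<and>
         \<comment> \<open>(2)\<close>
         X \<delta> 0 = 0 \<and> Y \<delta> 0 = \<delta> \<and> X1 \<delta> 0 = 1 \<and> Y1 \<delta> 0 = 0 \<and>
         Y \<delta> t0 = y t0 \<and> X1 \<delta> t0 = 0 \<and> Y1 \<delta> t0 = 1 \<and>
         \<comment> \<open>integrability of the curvature integrands\<close>
         surf_integrable (Y \<delta>) (X1 \<delta>) (Y1 \<delta>) {0<..<t0}
           (normB2 (Y \<delta>) (X1 \<delta>) (Y1 \<delta>) (X2 \<delta>) (Y2 \<delta>))) \<and>
      (td \<longlongrightarrow> 0) (at_right 0) \<and>
      ((\<lambda>\<delta>. LINT t:{a<..<b}|lborel. (r \<delta> t)\<^sup>2 + (R1 \<delta> t)\<^sup>2) \<longlongrightarrow> 0) (at_right 0) \<and>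
      (\<forall>\<epsilon>>0. eventually (\<lambda>\<delta>. \<forall>t\<in>{a<..<b}. \<bar>r \<delta> t\<bar> < \<epsilon>) (at_right 0)) \<and>
      ((\<lambda>\<delta>. X \<delta> t0) \<longlongrightarrow> x t0) (at_right 0) \<and>
      \<comment> \<open>(3)\<close>
      (\<forall>p::real. 1 \<le> p \<longrightarrow>
         ((\<lambda>\<delta>. LINT t:{0<..<t0}|lborel.
              \<bar>X \<delta> t - x t\<bar> powr p + \<bar>Y \<delta> t - y t\<bar> powr p
              + \<bar>X1 \<delta> t - deriv x t\<bar> powr p + \<bar>Y1 \<delta> t - deriv y t\<bar> powr p) \<longlongrightarrow> 0)
           (at_right 0)) \<and>
      \<comment> \<open>(4)\<close>
      ((\<lambda>\<delta>. area (Y \<delta>) (X1 \<delta>) (Y1 \<delta>) {0<..<t0})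
          \<longlongrightarrow> area y (deriv x) (deriv y) {0<..<t0}) (at_right 0) \<and>
      \<comment> \<open>(5)\<close>
      (\<exists>C. \<forall>\<delta>\<in>{0<..<\<delta>0}.
         surf_int (Y \<delta>) (X1 \<delta>) (Y1 \<delta>) {0<..<t0}
           (normB2 (Y \<delta>) (X1 \<delta>) (Y1 \<delta>) (X2 \<delta>) (Y2 \<delta>)) \<le> C) \<and>
      \<comment> \<open>(6)\<close>
      ((\<lambda>\<delta>. surf_int (Y \<delta>) (X1 \<delta>) (Y1 \<delta>) {0<..<t0}
           (\<lambda>t. k u0 * (meanH (Y \<delta>) (X1 \<delta>) (Y1 \<delta>) (X2 \<delta>) (Y2 \<delta>) t - Hs u0)\<^sup>2))
        \<longlongrightarrow> surf_int y (deriv x) (deriv y) {0<..<t0}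
           (\<lambda>t. k u0 * (meanH y (deriv x) (deriv y) (deriv (deriv x)) (deriv (deriv y)) t - Hs u0)\<^sup>2))
        (at_right 0))"
proof -
  have T: "0 < t0" by (rule t0_pos)
  have opn: "open {0<..<t0}" by simp
  have dx: "\<forall>t\<in>{0<..<t0}. deriv x t = 0 \<and> deriv y t = 1"
  proof
    fix t assume t: "t \<in> {0<..<t0}"
    have ev: "eventually (\<lambda>s. s \<in> {0<..<t0}) (nhds t)" by (rule eventually_nhds_in_open[OF opn t])
    have "deriv x t = deriv (\<lambda>_. 0::real) t"
      by (rule deriv_cong_ev) (use ev line in \<open>auto elim!: eventually_mono\<close>)
    moreover have "deriv y t = deriv (\<lambda>s. s) t"
      by (rule deriv_cong_ev) (use ev line in \<open>auto elim!: eventually_mono\<close>)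
    ultimately show "deriv x t = 0 \<and> deriv y t = 1" by simp
  qed
  have ddx: "\<forall>t\<in>{0<..<t0}. deriv (deriv x) t = 0 \<and> deriv (deriv y) t = 0"
  proof
    fix t assume t: "t \<in> {0<..<t0}"
    have ev: "eventually (\<lambda>s. s \<in> {0<..<t0}) (nhds t)" by (rule eventually_nhds_in_open[OF opn t])
    have "deriv (deriv x) t = deriv (\<lambda>_. 0::real) t"
      by (rule deriv_cong_ev) (use ev dx in \<open>auto elim!: eventually_mono\<close>)
    moreover have "deriv (deriv y) t = deriv (\<lambda>_. 1::real) t"
      by (rule deriv_cong_ev) (use ev dx in \<open>auto elim!: eventually_mono\<close>)
    ultimately show "deriv (deriv x) t = 0 \<and> deriv (deriv y) t = 0" by simp
  qed
  have hx: "\<forall>t\<in>{0<..<t0}. x t = 0 \<and> y t = t \<and> deriv x t = 0 \<and> deriv y t = 1"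
    using line dx by auto
  have hsp: "\<forall>t\<in>{0<..<t0}. y t = t \<and> speed (deriv x) (deriv y) t = 1"
    using line unit_speed by auto
  have hH: "\<forall>t\<in>{0<..<t0}. y t = t \<and> speed (deriv x) (deriv y) t = 1 \<and>
        meanH y (deriv x) (deriv y) (deriv (deriv x)) (deriv (deriv y)) t = 0"
  proof
    fix t assume t: "t \<in> {0<..<t0}"
    then have a: "y t = t" "deriv x t = 0" "deriv y t = 1" "deriv (deriv x) t = 0" "deriv (deriv y) t = 0"
      using line dx ddx by auto
    have s: "speed (deriv x) (deriv y) t = 1" using a by (simp add: speed_def)
    show "y t = t \<and> speed (deriv x) (deriv y) t = 1 \<and>
        meanH y (deriv x) (deriv y) (deriv (deriv x)) (deriv (deriv y)) t = 0"
      using a s by (simp add: meanH_def kappa1_def kappa2_def)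
  qed
  have d0pos: "0 < d0 t0" using T by (simp add: d0_def)
  show ?thesis
    apply (rule exI[of _ "t0/4"], rule exI[of _ "t0/2"])
    apply (intro conjI)
    subgoal using T by simp
    subgoal using T by simp
    subgoal using T by simp
    apply (rule exI[of _ "d0 t0"], rule conjI)
    subgoal by (rule d0pos)
    apply (rule exI[of _ "XX t0"], rule exI[of _ "YY t0"], rule exI[of _ "X1 t0"], rule exI[of _ "Y1 t0"],
           rule exI[of _ "X2 t0"], rule exI[of _ "Y2 t0"], rule exI[of _ sB],
           rule exI[of _ "\<lambda>\<delta> t. cc t0 \<delta> * bm t0 t"], rule exI[of _ "\<lambda>\<delta> t. cc t0 \<delta> * bmd t0 t"])
    apply (intro conjI)
    subgoal by (intro ballI per_delta[OF T _ end_pt(2)])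
    subgoal by (rule sB_lim)
    subgoal by (rule lim_r[OF T])
    subgoal by (rule lim_unif[OF T])
    subgoal by (rule lim_X[OF T end_pt(1)])
    subgoal by (rule lim_p[OF T hx])
    subgoal by (rule lim_area[OF T hsp])
    subgoal by (rule bound_C[OF T])
    subgoal by (rule lim_H[OF T hH])
    done
qed

end
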